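(* Let $p\in(1,\infty)$, $\alpha\in(0,\frac np]$ and $f\in C^p_\alpha(\mathbb{R}^n)$. If $s>n-\alpha p$ and $\mu\in\mathcal{M}^s(\mathbb{R}^n)$, then $\|Mf\|_{L^1(\mu)}\le C\|f\|_{C^p_\alpha(\mathbb{R}^n)}$, where $C$ does not depend on $f$ (it may depend on $n,p,\alpha,s$ and $c_s(\mu)$).
   Context: $Mf$ is the centred Hardy–Littlewood maximal function on $\mathbb{R}^n$, defined at every point. For $\alpha>0$, $k=\lfloor\alpha\rfloor$, and a ball $\Delta$, $P^k_\Delta f$ is the unique polynomial of degree $\le k$ with $\int_\Delta(f-P^k_\Delta f)(y)y^\gamma dy=0$ for all multi-indices $|\gamma|\le k$; $f^\sharp_\alpha(x)=\sup_{\Delta\ni x}|\Delta|^{-\alpha/n}\frac1{|\Delta|}\int_\Delta|f-P^k_\Delta f|$ (supremum over balls containing $x$); $C^p_\alpha(\mathbb{R}^n)=\{f\in L^p:f^\sharp_\alpha\in L^p\}$ with norm $\|f\|_{L^p}+\|f^\sharp_\alpha\|_{L^p}$. $\mathcal{M}^s(\mathbb{R}^n)$ is the set of Borel probability measures $\mu$ with $c_s(\mu)=\sup_{x,r>0}\mu(\Delta(x,r))/r^s<\infty$. *)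

theory Defs
  imports "HOL-Probability.Probability"
begin

definition multi_idx :: "nat \<Rightarrow> ('a::euclidean_space \<Rightarrow> nat) set" where
  "multi_idx k = {\<gamma>. (\<forall>b. b \<notin> Basis \<longrightarrow> \<gamma> b = 0) \<and> (\<Sum>b\<in>Basis. \<gamma> b) \<le> k}"

definition monom :: "('a::euclidean_space \<Rightarrow> nat) \<Rightarrow> 'a \<Rightarrow> real" where
  "monom \<gamma> x = (\<Prod>b\<in>Basis. (x \<bullet> b) ^ \<gamma> b)"

definition polys :: "nat \<Rightarrow> ('a::euclidean_space \<Rightarrow> real) set" where
  "polys k = {P. \<exists>c. \<forall>x. P x = (\<Sum>\<gamma>\<in>multi_idx k. c \<gamma> * monom \<gamma> x)}"

definition poly_proj :: "nat \<Rightarrow> 'a::euclidean_space set \<Rightarrow> ('a \<Rightarrow> real) \<Rightarrow> ('a \<Rightarrow> real)" where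
  "poly_proj k D f = (THE P. P \<in> polys k \<and>
      (\<forall>\<gamma>\<in>multi_idx k. (LINT y:D|lebesgue. (f y - P y) * monom \<gamma> y) = 0))"

definition sharp_max :: "real \<Rightarrow> ('a::euclidean_space \<Rightarrow> real) \<Rightarrow> 'a \<Rightarrow> ennreal" where
  "sharp_max \<alpha> f x = (SUP cr \<in> {(c, r). 0 < r \<and> x \<in> ball c r}.
      ennreal (measure lebesgue (ball (fst cr) (snd cr)) powr (- \<alpha> / real DIM('a))
               / measure lebesgue (ball (fst cr) (snd cr)))
      * (\<integral>\<^sup>+ y \<in> ball (fst cr) (snd cr).
           ennreal \<bar>f y - poly_proj (nat \<lfloor>\<alpha>\<rfloor>) (ball (fst cr) (snd cr)) f y\<bar> \<partial>lebesgue))"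

definition maximal :: "('a::euclidean_space \<Rightarrow> real) \<Rightarrow> 'a \<Rightarrow> ennreal" where
  "maximal f x = (SUP r \<in> {0<..}. (\<integral>\<^sup>+ y \<in> ball x r. ennreal \<bar>f y\<bar> \<partial>lebesgue)
                                    / emeasure lebesgue (ball x r))"

definition in_Lp :: "real \<Rightarrow> ('a::euclidean_space \<Rightarrow> real) \<Rightarrow> bool" where
  "in_Lp p f \<longleftrightarrow> f \<in> borel_measurable lebesgue \<and> integrable lebesgue (\<lambda>x. \<bar>f x\<bar> powr p)"

definition Lp_norm :: "real \<Rightarrow> ('a::euclidean_space \<Rightarrow> real) \<Rightarrow> real" where
  "Lp_norm p f = (\<integral>x. \<bar>f x\<bar> powr p \<partial>lebesgue) powr (1 / p)"

definition in_Lp_enn :: "real \<Rightarrow> ('a::euclidean_space \<Rightarrow> ennreal) \<Rightarrow> bool" where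
  "in_Lp_enn p g \<longleftrightarrow> (AE x in lebesgue. g x < \<infinity>) \<and> in_Lp p (\<lambda>x. enn2real (g x))"

definition in_Cp :: "real \<Rightarrow> real \<Rightarrow> ('a::euclidean_space \<Rightarrow> real) \<Rightarrow> bool" where
  "in_Cp p \<alpha> f \<longleftrightarrow> in_Lp p f \<and> in_Lp_enn p (sharp_max \<alpha> f)"

definition Cp_norm :: "real \<Rightarrow> real \<Rightarrow> ('a::euclidean_space \<Rightarrow> real) \<Rightarrow> real" where
  "Cp_norm p \<alpha> f = Lp_norm p f + Lp_norm p (\<lambda>x. enn2real (sharp_max \<alpha> f x))"

definition cs :: "real \<Rightarrow> 'a::euclidean_space measure \<Rightarrow> ennreal" where
  "cs s \<mu> = (SUP xr \<in> UNIV \<times> {0<..}. emeasure \<mu> (ball (fst xr) (snd xr)) / ennreal (snd xr powr s))"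

definition Ms :: "real \<Rightarrow> 'a::euclidean_space measure \<Rightarrow> bool" where
  "Ms s \<mu> \<longleftrightarrow> prob_space \<mu> \<and> sets \<mu> = sets borel \<and> cs s \<mu> < \<infinity>"

end

theory Submission
  imports Defs "HOL-Computational_Algebra.Polynomial"
begin

lemma finite_multi_idx: "finite (multi_idx k :: ('a::euclidean_space \<Rightarrow> nat) set)"
proof -
  have "multi_idx k \<subseteq> {\<gamma>::'a\<Rightarrow>nat. \<forall>b. (b \<in> Basis \<longrightarrow> \<gamma> b \<in> {..k}) \<and> (b \<notin> Basis \<longrightarrow> \<gamma> b = 0)}"
  proof
    fix \<gamma> :: "'a \<Rightarrow> nat" assume g: "\<gamma> \<in> multi_idx k"
    { fix b :: 'a assume b: "b \<in> Basis"
      have "\<gamma> b \<le> (\<Sum>b\<in>Basis. \<gamma> b)" using b by (intro member_le_sum) auto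
      also have "\<dots> \<le> k" using g by (simp add: multi_idx_def)
      finally have "\<gamma> b \<in> {..k}" by simp }
    then show "\<gamma> \<in> {\<gamma>::'a\<Rightarrow>nat. \<forall>b. (b \<in> Basis \<longrightarrow> \<gamma> b \<in> {..k}) \<and> (b \<notin> Basis \<longrightarrow> \<gamma> b = 0)}"
      using g by (auto simp: multi_idx_def)
  qed
  moreover have "finite {\<gamma>::'a\<Rightarrow>nat. \<forall>b. (b \<in> Basis \<longrightarrow> \<gamma> b \<in> {..k}) \<and> (b \<notin> Basis \<longrightarrow> \<gamma> b = 0)}"
    by (rule finite_set_of_finite_funs) auto
  ultimately show ?thesis by (rule finite_subset)
qed

lemma multi_idx_mono: "k \<le> l \<Longrightarrow> multi_idx k \<subseteq> multi_idx l"
  by (auto simp: multi_idx_def)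

lemma polys_iff: "P \<in> polys k \<longleftrightarrow> (\<exists>c. P = (\<lambda>x. \<Sum>\<gamma>\<in>multi_idx k. c \<gamma> * Defs.monom \<gamma> x))"
  by (auto simp: polys_def)

lemma polys_mono: assumes "k \<le> l" "P \<in> polys k" shows "P \<in> polys l"
proof -
  obtain c where c: "P = (\<lambda>x. \<Sum>\<gamma>\<in>multi_idx k. c \<gamma> * Defs.monom \<gamma> x)" using assms by (auto simp: polys_iff)
  define d where "d \<gamma> = (if \<gamma> \<in> multi_idx k then c \<gamma> else 0)" for \<gamma>
  have "P x = (\<Sum>\<gamma>\<in>multi_idx l. d \<gamma> * Defs.monom \<gamma> x)" for x
  proof -
    have "(\<Sum>\<gamma>\<in>multi_idx l. d \<gamma> * Defs.monom \<gamma> x) = (\<Sum>\<gamma>\<in>multi_idx k. d \<gamma> * Defs.monom \<gamma> x)"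
      by (rule sum.mono_neutral_right) (use multi_idx_mono[OF assms(1)] finite_multi_idx in \<open>auto simp: d_def\<close>)
    also have "\<dots> = P x" unfolding c d_def by (rule sum.cong) auto
    finally show ?thesis by simp
  qed
  then show ?thesis by (auto simp: polys_def)
qed

lemma polys_add: assumes "P \<in> polys k" "Q \<in> polys k" shows "(\<lambda>x. P x + Q x) \<in> polys k"
proof -
  obtain c d where "P = (\<lambda>x. \<Sum>\<gamma>\<in>multi_idx k. c \<gamma> * Defs.monom \<gamma> x)" "Q = (\<lambda>x. \<Sum>\<gamma>\<in>multi_idx k. d \<gamma> * Defs.monom \<gamma> x)"
    using assms by (auto simp: polys_iff)
  then show ?thesis unfolding polys_def
    by (auto intro!: exI[of _ "\<lambda>\<gamma>. c \<gamma> + d \<gamma>"] simp: sum.distrib distrib_right)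
qed

lemma polys_cmult: assumes "P \<in> polys k" shows "(\<lambda>x. a * P x) \<in> polys k"
proof -
  obtain c where "P = (\<lambda>x. \<Sum>\<gamma>\<in>multi_idx k. c \<gamma> * Defs.monom \<gamma> x)"
    using assms by (auto simp: polys_iff)
  then show ?thesis unfolding polys_def
    by (auto intro!: exI[of _ "\<lambda>\<gamma>. a * c \<gamma>"] simp: sum_distrib_left mult.assoc)
qed

lemma polys_zero: "(\<lambda>x. 0) \<in> polys k"
  unfolding polys_def by (auto intro!: exI[of _ "\<lambda>\<gamma>. 0"])

lemma polys_diff: assumes "P \<in> polys k" "Q \<in> polys k" shows "(\<lambda>x. P x - Q x) \<in> polys k"
  using polys_add[OF assms(1) polys_cmult[OF assms(2), of "-1"]] by simp

lemma polys_sum: assumes "finite S" "\<And>i. i \<in> S \<Longrightarrow> P i \<in> polys k"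
  shows "(\<lambda>x. \<Sum>i\<in>S. P i x) \<in> polys k"
  using assms by (induction S rule: finite_induct) (auto intro: polys_zero polys_add)

lemma polys_monom: assumes "\<gamma> \<in> multi_idx k" shows "Defs.monom \<gamma> \<in> polys k"
proof -
  have "Defs.monom \<gamma> x = (\<Sum>\<delta>\<in>multi_idx k. (if \<delta> = \<gamma> then 1 else 0) * Defs.monom \<delta> x)" for x
  proof -
    have "(\<Sum>\<delta>\<in>multi_idx k. (if \<delta> = \<gamma> then 1 else 0) * Defs.monom \<delta> x)
        = (\<Sum>\<delta>\<in>multi_idx k. if \<delta> = \<gamma> then Defs.monom \<delta> x else 0)" by (rule sum.cong) auto
    also have "\<dots> = Defs.monom \<gamma> x" using assms by (simp add: sum.delta finite_multi_idx)
    finally show ?thesis by simp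
  qed
  then show ?thesis unfolding polys_def mem_Collect_eq
    by (intro exI[where x="\<lambda>\<delta>. if \<delta> = \<gamma> then 1 else 0"] allI) blast
qed

lemma monom_add: "Defs.monom (\<lambda>b. \<gamma> b + \<delta> b) x = Defs.monom \<gamma> x * Defs.monom \<delta> x"
  by (simp add: Defs.monom_def power_add prod.distrib)

lemma multi_idx_add: "\<gamma> \<in> multi_idx a \<Longrightarrow> \<delta> \<in> multi_idx b \<Longrightarrow> (\<lambda>i. \<gamma> i + \<delta> i) \<in> multi_idx (a + b)"
  by (auto simp: multi_idx_def sum.distrib)

lemma polys_mult: assumes "P \<in> polys a" "Q \<in> polys b" shows "(\<lambda>x. P x * Q x) \<in> polys (a + b)"
proof -
  obtain c d where cd: "P = (\<lambda>x. \<Sum>\<gamma>\<in>multi_idx a. c \<gamma> * Defs.monom \<gamma> x)" "Q = (\<lambda>x. \<Sum>\<gamma>\<in>multi_idx b. d \<gamma> * Defs.monom \<gamma> x)"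
    using assms by (auto simp: polys_iff)
  have "(\<lambda>x. P x * Q x) = (\<lambda>x. \<Sum>\<gamma>\<in>multi_idx a. \<Sum>\<delta>\<in>multi_idx b. (c \<gamma> * d \<delta>) * Defs.monom (\<lambda>i. \<gamma> i + \<delta> i) x)"
    unfolding cd monom_add by (simp add: sum_product mult_ac)
  also have "\<dots> \<in> polys (a + b)"
    by (intro polys_sum finite_multi_idx polys_cmult polys_monom multi_idx_add)
  finally show ?thesis .
qed

lemma polys_const: "(\<lambda>x. a) \<in> polys k"
proof -
  have "(\<lambda>_. 0) \<in> multi_idx k" by (simp add: multi_idx_def)
  from polys_cmult[OF polys_monom[OF this], of a] show ?thesis by (simp add: Defs.monom_def)
qed

lemma polys_coord: assumes "b \<in> Basis" shows "(\<lambda>x. x \<bullet> b) \<in> polys 1"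
proof -
  define \<gamma> where "\<gamma> = (\<lambda>i. if i = b then 1 else 0::nat)"
  have "\<gamma> \<in> multi_idx 1" using assms by (simp add: multi_idx_def \<gamma>_def)
  moreover have "Defs.monom \<gamma> = (\<lambda>x. x \<bullet> b)"
    using assms by (auto simp: Defs.monom_def \<gamma>_def if_distrib prod.delta cong: if_cong)
  ultimately show ?thesis using polys_monom by metis
qed

lemma polys_affine_coord: assumes "b \<in> Basis" shows "(\<lambda>x. a + r * (x \<bullet> b)) \<in> polys 1"
  using polys_add[OF polys_const polys_cmult[OF polys_coord[OF assms]]] .

lemma polys_power: assumes "P \<in> polys 1" shows "(\<lambda>x. P x ^ m) \<in> polys m"
proof (induction m)
  case 0 then show ?case using polys_const by simp
next
  case (Suc m) then show ?case using polys_mult[OF assms Suc] by simp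
qed

lemma polys_prod_basis:
  assumes "S \<subseteq> Basis" "\<And>b. b \<in> Basis \<Longrightarrow> h b \<in> polys 1"
  shows "(\<lambda>z. \<Prod>b\<in>S. h b z ^ \<gamma> b) \<in> polys (\<Sum>b\<in>S. \<gamma> b)"
proof -
  have "finite S" by (rule finite_subset[OF assms(1)]) simp
  then show ?thesis using assms(1)
  proof (induction S rule: finite_induct)
    case empty then show ?case using polys_const by simp
  next
    case (insert b S)
    then show ?case using polys_mult[OF polys_power[OF assms(2)] insert.IH, of b "\<gamma> b"] by simp
  qed
qed

lemma polys_affine: assumes "P \<in> polys k" shows "(\<lambda>z. P (c + r *\<^sub>R z)) \<in> polys k"
proof -
  obtain d where d: "P = (\<lambda>x. \<Sum>\<gamma>\<in>multi_idx k. d \<gamma> * Defs.monom \<gamma> x)" using assms by (auto simp: polys_iff)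
  have "(\<lambda>z. P (c + r *\<^sub>R z)) = (\<lambda>z. \<Sum>\<gamma>\<in>multi_idx k. d \<gamma> * (\<Prod>b\<in>Basis. (c \<bullet> b + r * (z \<bullet> b)) ^ \<gamma> b))"
    by (simp add: d Defs.monom_def inner_add_left)
  also have "\<dots> \<in> polys k"
  proof (intro polys_sum finite_multi_idx polys_cmult)
    fix \<gamma> :: "'a \<Rightarrow> nat" assume g: "\<gamma> \<in> multi_idx k"
    have "(\<lambda>z. \<Prod>b\<in>Basis. (c \<bullet> b + r * (z \<bullet> b)) ^ \<gamma> b) \<in> polys (\<Sum>b\<in>Basis. \<gamma> b)"
      apply (rule polys_prod_basis) apply simp apply (erule polys_affine_coord) done
    then show "(\<lambda>z. \<Prod>b\<in>Basis. (c \<bullet> b + r * (z \<bullet> b)) ^ \<gamma> b) \<in> polys k"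
      by (rule polys_mono[rotated]) (use g in \<open>simp add: multi_idx_def\<close>)
  qed
  finally show ?thesis .
qed

lemma polys_continuous: assumes "P \<in> polys k" shows "continuous_on S P"
proof -
  obtain d where d: "P = (\<lambda>x. \<Sum>\<gamma>\<in>multi_idx k. d \<gamma> * Defs.monom \<gamma> x)" using assms by (auto simp: polys_iff)
  show ?thesis unfolding d Defs.monom_def by (intro continuous_intros)
qed

lemma polys_borel: assumes "P \<in> polys k" shows "P \<in> borel_measurable borel"
  using polys_continuous[OF assms] by (rule borel_measurable_continuous_onI)

lemma polys_line: assumes "P \<in> polys k" shows "\<exists>q::real poly. \<forall>t. P (c + t *\<^sub>R v) = poly q t"
proof -
  obtain d where d: "P = (\<lambda>x. \<Sum>\<gamma>\<in>multi_idx k. d \<gamma> * Defs.monom \<gamma> x)" using assms by (auto simp: polys_iff)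
  define q where "q = (\<Sum>\<gamma>\<in>multi_idx k. smult (d \<gamma>) (\<Prod>b\<in>Basis. [:c \<bullet> b, v \<bullet> b:] ^ \<gamma> b))"
  have "P (c + t *\<^sub>R v) = poly q t" for t
    by (simp add: d q_def Defs.monom_def poly_sum poly_prod inner_add_left mult_ac)
  then show ?thesis by blast
qed

lemma polys_zero_on_ball:
  assumes "P \<in> polys k" "r > 0" "\<And>y. y \<in> ball c r \<Longrightarrow> P y = 0"
  shows "P x = 0"
proof -
  obtain q where q: "\<And>t. P (c + t *\<^sub>R (x - c)) = poly q t" using polys_line[OF assms(1)] by blast
  define \<delta> where "\<delta> = r / (norm (x - c) + 1)"
  have "norm (x - c) + 1 > 0" by (smt (verit) norm_ge_zero)
  then have \<delta>: "\<delta> > 0" using assms(2) unfolding \<delta>_def by (rule divide_pos_pos[rotated])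
  have "{0<..<\<delta>} \<subseteq> {t. poly q t = 0}"
  proof
    fix t assume t: "t \<in> {0<..<\<delta>}"
    have "norm (t *\<^sub>R (x - c)) = t * norm (x - c)" using t by simp
    also have "\<dots> \<le> \<delta> * norm (x - c)" using t by (intro mult_right_mono) auto
    also have "\<dots> < r" unfolding \<delta>_def using assms(2) \<open>norm (x - c) + 1 > 0\<close>
      by (simp add: pos_divide_less_eq)
    finally have "c + t *\<^sub>R (x - c) \<in> ball c r" by (simp add: dist_norm)
    then show "t \<in> {t. poly q t = 0}" using assms(3) q by (metis mem_Collect_eq)
  qed
  moreover have "infinite {0<..<\<delta>}" using \<delta> by simp
  ultimately have "q = 0" using poly_roots_finite finite_subset by blast
  then show ?thesis using q[of 1] by simp
qed


definition ipM :: "'a measure \<Rightarrow> ('a \<Rightarrow> real) \<Rightarrow> ('a \<Rightarrow> real) \<Rightarrow> real" where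
  "ipM M u v = integral\<^sup>L M (\<lambda>x. u x * v x)"

locale gsV =
  fixes M :: "'a measure" and V :: "('a \<Rightarrow> real) set"
  assumes fin: "finite_measure M"
  and V0: "(\<lambda>x. 0) \<in> V"
  and Vlin: "\<And>u v a b. u \<in> V \<Longrightarrow> v \<in> V \<Longrightarrow> (\<lambda>x. a * u x + b * v x) \<in> V"
  and Vmeas: "\<And>u. u \<in> V \<Longrightarrow> u \<in> borel_measurable M"
  and Vbdd: "\<And>u. u \<in> V \<Longrightarrow> \<exists>K. \<forall>x\<in>space M. \<bar>u x\<bar> \<le> K"
  and Vnd: "\<And>u. u \<in> V \<Longrightarrow> integral\<^sup>L M (\<lambda>x. u x * u x) = 0 \<Longrightarrow> \<forall>x\<in>space M. u x = 0"
begin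

lemma V_sum: "finite S \<Longrightarrow> (\<And>i. i \<in> S \<Longrightarrow> g i \<in> V) \<Longrightarrow> (\<lambda>x. \<Sum>i\<in>S. a i * g i x) \<in> V"
proof (induction S rule: finite_induct)
  case empty then show ?case using V0 by simp
next
  case (insert j S)
  have "(\<lambda>x. a j * g j x + 1 * (\<Sum>i\<in>S. a i * g i x)) \<in> V"
    using insert by (intro Vlin) auto
  then show ?case using insert by simp
qed

lemma V_bdd_mult:
  assumes "integrable M f" "f \<in> borel_measurable M" "v \<in> V"
  shows "integrable M (\<lambda>x. f x * v x)"
proof -
  obtain K where K: "\<forall>x\<in>space M. \<bar>v x\<bar> \<le> K" using Vbdd[OF assms(3)] by blast
  show ?thesis
  proof (rule Bochner_Integration.integrable_bound[of _ "\<lambda>x. K * f x"])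
    show "integrable M (\<lambda>x. K * f x)" using assms(1) by simp
    show "(\<lambda>x. f x * v x) \<in> borel_measurable M" using assms(2) Vmeas[OF assms(3)] by simp
    show "AE x in M. norm (f x * v x) \<le> norm (K * f x)"
    proof (rule AE_I2)
      fix x assume x: "x \<in> space M"
      have "\<bar>f x * v x\<bar> = \<bar>f x\<bar> * \<bar>v x\<bar>" by (simp add: abs_mult)
      also have "\<dots> \<le> \<bar>f x\<bar> * K" using K x by (intro mult_left_mono) auto
      also have "\<dots> \<le> \<bar>f x\<bar> * \<bar>K\<bar>" by (intro mult_left_mono) auto
      also have "\<dots> = \<bar>K * f x\<bar>" by (simp add: abs_mult)
      finally show "norm (f x * v x) \<le> norm (K * f x)" by simp
    qed
  qed
qed

lemma V_integrable: assumes "u \<in> V" shows "integrable M u"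
proof -
  interpret finite_measure M by (rule fin)
  obtain K where K: "\<forall>x\<in>space M. \<bar>u x\<bar> \<le> K" using Vbdd[OF assms] by blast
  show ?thesis
    by (rule integrable_const_bound[where B=K]) (use K Vmeas[OF assms] in auto)
qed

lemma V_integrable_mult: assumes "u \<in> V" "v \<in> V" shows "integrable M (\<lambda>x. u x * v x)"
  using V_bdd_mult[OF V_integrable[OF assms(1)] Vmeas[OF assms(1)] assms(2)] .

lemma ip_sym: "ipM M u v = ipM M v u"
  unfolding ipM_def by (simp add: mult.commute)

lemma ip_sum_left:
  assumes "finite S" "\<And>i. i \<in> S \<Longrightarrow> g i \<in> V" "w \<in> V"
  shows "ipM M (\<lambda>x. \<Sum>i\<in>S. a i * g i x) w = (\<Sum>i\<in>S. a i * ipM M (g i) w)"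
proof -
  have "ipM M (\<lambda>x. \<Sum>i\<in>S. a i * g i x) w = integral\<^sup>L M (\<lambda>x. \<Sum>i\<in>S. a i * (g i x * w x))"
    unfolding ipM_def by (simp add: sum_distrib_right mult.assoc)
  also have "\<dots> = (\<Sum>i\<in>S. integral\<^sup>L M (\<lambda>x. a i * (g i x * w x)))"
    using assms by (intro Bochner_Integration.integral_sum) (auto intro: V_integrable_mult)
  also have "\<dots> = (\<Sum>i\<in>S. a i * ipM M (g i) w)"
    unfolding ipM_def by simp
  finally show ?thesis .
qed

lemma ip_sum_left_f:
  assumes "finite S" "\<And>i. i \<in> S \<Longrightarrow> g i \<in> V" "integrable M f" "f \<in> borel_measurable M"
  shows "ipM M f (\<lambda>x. \<Sum>i\<in>S. a i * g i x) = (\<Sum>i\<in>S. a i * ipM M f (g i))"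
proof -
  have "ipM M f (\<lambda>x. \<Sum>i\<in>S. a i * g i x) = integral\<^sup>L M (\<lambda>x. \<Sum>i\<in>S. a i * (f x * g i x))"
    unfolding ipM_def by (simp add: sum_distrib_left mult_ac)
  also have "\<dots> = (\<Sum>i\<in>S. integral\<^sup>L M (\<lambda>x. a i * (f x * g i x)))"
    using assms by (intro Bochner_Integration.integral_sum) (auto intro: V_bdd_mult)
  also have "\<dots> = (\<Sum>i\<in>S. a i * ipM M f (g i))"
    unfolding ipM_def by simp
  finally show ?thesis .
qed

lemma ip_cong: "(\<And>x. x \<in> space M \<Longrightarrow> u x = u' x) \<Longrightarrow> ipM M u w = ipM M u' w"
  unfolding ipM_def by (intro Bochner_Integration.integral_cong) auto

lemma ip_diff_left:
  assumes "u \<in> V" "v \<in> V" "w \<in> V"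
  shows "ipM M (\<lambda>x. u x - v x) w = ipM M u w - ipM M v w"
  unfolding ipM_def using assms
  by (simp add: left_diff_distrib V_integrable_mult)

lemma ip_scale_left: "ipM M (\<lambda>x. u x / c) w = ipM M u w / c"
  unfolding ipM_def by simp

lemma GS:
  assumes "finite I" "\<And>i. i \<in> I \<Longrightarrow> m i \<in> V"
  shows "\<exists>E. finite E \<and> E \<subseteq> V \<and> (\<forall>e\<in>E. \<forall>e'\<in>E. ipM M e e' = (if e = e' then 1 else 0))
            \<and> (\<forall>i\<in>I. \<forall>x\<in>space M. m i x = (\<Sum>e\<in>E. ipM M (m i) e * e x))"
  using assms
proof (induction I rule: finite_induct)
  case empty then show ?case by (intro exI[of _ "{}"]) auto
next
  case (insert j I)
  then obtain E where E: "finite E" "E \<subseteq> V" and ON: "\<forall>e\<in>E. \<forall>e'\<in>E. ipM M e e' = (if e = e' then 1 else 0)"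
    and rep: "\<forall>i\<in>I. \<forall>x\<in>space M. m i x = (\<Sum>e\<in>E. ipM M (m i) e * e x)" by auto
  have mj: "m j \<in> V" using insert by auto
  define c where "c e = ipM M (m j) e" for e
  define s where "s = (\<lambda>x. \<Sum>e\<in>E. c e * e x)"
  have sV: "s \<in> V" unfolding s_def using E by (intro V_sum) auto
  define h where "h = (\<lambda>x. m j x - s x)"
  have hV: "h \<in> V" using Vlin[OF mj sV, of 1 "-1"] by (simp add: h_def)
  have ip_s: "ipM M s e' = c e'" if "e' \<in> E" for e'
  proof -
    have "ipM M s e' = (\<Sum>e\<in>E. c e * ipM M e e')" unfolding s_def
      using E that by (intro ip_sum_left) auto
    also have "\<dots> = (\<Sum>e\<in>E. if e = e' then c e else 0)"
      using ON that by (intro sum.cong) auto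
    also have "\<dots> = c e'" using E that by (simp add: sum.delta)
    finally show ?thesis .
  qed
  have h_orth: "ipM M h e' = 0" if "e' \<in> E" for e'
    unfolding h_def using that E mj sV by (simp add: ip_diff_left ip_s c_def subset_iff)
  have other: "\<forall>x\<in>space M. m i x = (\<Sum>e\<in>E. ipM M (m i) e * e x)" if "i \<in> I" for i
    using rep that by auto
  have hh_nonneg: "ipM M h h \<ge> 0" unfolding ipM_def by (intro integral_nonneg_AE) auto
  show ?case
  proof (cases "ipM M h h = 0")
    case True
    have "integral\<^sup>L M (\<lambda>x. h x * h x) = 0" using True by (simp only: ipM_def)
    from Vnd[OF hV this] have h0: "\<forall>x\<in>space M. h x = 0" .
    have mjrep: "\<forall>x\<in>space M. m j x = (\<Sum>e\<in>E. ipM M (m j) e * e x)"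
    proof
      fix x assume "x \<in> space M"
      then have "m j x - s x = 0" using h0 by (simp add: h_def)
      then show "m j x = (\<Sum>e\<in>E. ipM M (m j) e * e x)" by (simp add: s_def c_def)
    qed
    have "\<forall>i\<in>insert j I. \<forall>x\<in>space M. m i x = (\<Sum>e\<in>E. ipM M (m i) e * e x)"
      using rep mjrep by blast
    then show ?thesis using E ON by blast
  next
    case False
    then have hpos: "ipM M h h > 0" using hh_nonneg by simp
    define \<sigma> where "\<sigma> = sqrt (ipM M h h)"
    have \<sigma>: "\<sigma> > 0" "\<sigma> * \<sigma> = ipM M h h" using hpos by (auto simp: \<sigma>_def)
    define e0 where "e0 = (\<lambda>x. h x / \<sigma>)"
    have e0V: "e0 \<in> V" using Vlin[OF hV hV, of "1/\<sigma>" 0] by (simp add: e0_def)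
    have e0_orth: "ipM M e0 e' = 0" if "e' \<in> E" for e'
      unfolding e0_def ip_scale_left using h_orth[OF that] by simp
    have ip_h_e0: "ipM M h e0 = \<sigma>"
    proof -
      have "ipM M h e0 = ipM M e0 h" by (rule ip_sym)
      also have "\<dots> = ipM M h h / \<sigma>" unfolding e0_def ip_scale_left ..
      also have "\<dots> = \<sigma>" using \<sigma> by (simp add: field_simps)
      finally show ?thesis .
    qed
    have e0e0: "ipM M e0 e0 = 1"
      unfolding e0_def ip_scale_left using \<sigma> ip_h_e0 by (simp add: e0_def)
    have e0E: "e0 \<notin> E"
    proof
      assume "e0 \<in> E"
      then have "ipM M e0 e0 = 0" by (rule e0_orth)
      with e0e0 show False by simp
    qed
    have e0_orth': "ipM M e' e0 = 0" if "e' \<in> E" for e'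
      using e0_orth[OF that] ip_sym[of e' e0] by simp
    define E' where "E' = insert e0 E"
    have ON': "\<forall>e\<in>E'. \<forall>e'\<in>E'. ipM M e e' = (if e = e' then 1 else 0)"
    proof (intro ballI)
      fix e e' assume ee: "e \<in> E'" "e' \<in> E'"
      show "ipM M e e' = (if e = e' then 1 else 0)"
      proof (cases "e = e0")
        case True
        then show ?thesis
        proof (cases "e' = e0")
          case True with \<open>e = e0\<close> e0e0 show ?thesis by simp
        next
          case False
          then have "e' \<in> E" using ee by (simp add: E'_def)
          then show ?thesis using e0_orth[of e'] \<open>e = e0\<close> e0E by auto
        qed
      next
        case False
        then have eE: "e \<in> E" using ee by (simp add: E'_def)
        show ?thesis
        proof (cases "e' = e0")
          case True
          then show ?thesis using e0_orth'[OF eE] eE e0E by auto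
        next
          case False
          then have "e' \<in> E" using ee by (simp add: E'_def)
          then show ?thesis using ON eE by blast
        qed
      qed
    qed
    have mj_e0: "ipM M (m j) e0 = \<sigma>"
    proof -
      have "ipM M (m j) e0 = ipM M (\<lambda>x. h x + s x) e0" by (simp add: h_def)
      also have "\<dots> = ipM M h e0 + ipM M s e0"
        unfolding ipM_def using hV sV e0V by (simp add: distrib_right V_integrable_mult)
      also have "ipM M s e0 = (\<Sum>e\<in>E. c e * ipM M e e0)" unfolding s_def
        using E e0V by (intro ip_sum_left) auto
      also have "\<dots> = 0" using e0_orth' by simp
      finally show ?thesis using ip_h_e0 by simp
    qed
    have repj: "\<forall>x\<in>space M. m j x = (\<Sum>e\<in>E'. ipM M (m j) e * e x)"
    proof
      fix x assume "x \<in> space M"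
      have "m j x = \<sigma> * e0 x + s x" using \<sigma> by (simp add: e0_def h_def)
      then show "m j x = (\<Sum>e\<in>E'. ipM M (m j) e * e x)"
        using E e0E mj_e0 by (simp add: E'_def s_def c_def)
    qed
    have repi: "\<forall>x\<in>space M. m i x = (\<Sum>e\<in>E'. ipM M (m i) e * e x)" if "i \<in> I" for i
    proof -
      have "ipM M (m i) e0 = ipM M (\<lambda>x. \<Sum>e\<in>E. ipM M (m i) e * e x) e0"
        using other[OF that] by (intro ip_cong) auto
      also have "\<dots> = (\<Sum>e\<in>E. ipM M (m i) e * ipM M e e0)"
        using E e0V by (intro ip_sum_left) auto
      also have "\<dots> = 0" using e0_orth' by simp
      finally have "ipM M (m i) e0 = 0" .
      then show ?thesis using other[OF that] E e0E by (simp add: E'_def)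
    qed
    show ?thesis
      using E e0V ON' repj repi by (intro exI[of _ E']) (auto simp: E'_def)
  qed
qed

end


context gsV begin

lemma proj_exists:
  assumes "finite I" "\<And>i. i \<in> I \<Longrightarrow> m i \<in> V" "integrable M f" "f \<in> borel_measurable M"
  shows "\<exists>P\<in>V. \<forall>i\<in>I. integral\<^sup>L M (\<lambda>x. (f x - P x) * m i x) = 0"
proof -
  have "\<exists>E. finite E \<and> E \<subseteq> V \<and> (\<forall>e\<in>E. \<forall>e'\<in>E. ipM M e e' = (if e = e' then 1 else 0))
            \<and> (\<forall>i\<in>I. \<forall>x\<in>space M. m i x = (\<Sum>e\<in>E. ipM M (m i) e * e x))"
    by (rule GS[OF assms(1)]) (rule assms(2))
  then obtain E where E: "finite E" "E \<subseteq> V" and ON: "\<forall>e\<in>E. \<forall>e'\<in>E. ipM M e e' = (if e = e' then 1 else 0)"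
    and rep: "\<forall>i\<in>I. \<forall>x\<in>space M. m i x = (\<Sum>e\<in>E. ipM M (m i) e * e x)"
    by blast
  define P where "P = (\<lambda>x. \<Sum>e\<in>E. ipM M f e * e x)"
  have PV: "P \<in> V" unfolding P_def using E by (intro V_sum) auto
  have "integral\<^sup>L M (\<lambda>x. (f x - P x) * m i x) = 0" if i: "i \<in> I" for i
  proof -
    have mi: "m i \<in> V" using assms(2) i .
    have 1: "integral\<^sup>L M (\<lambda>x. (f x - P x) * m i x) = ipM M f (m i) - ipM M P (m i)"
      unfolding ipM_def using V_bdd_mult[OF assms(3,4) mi] V_integrable_mult[OF PV mi]
      by (simp add: left_diff_distrib)
    have 2: "ipM M f (m i) = ipM M f (\<lambda>x. \<Sum>e\<in>E. ipM M (m i) e * e x)"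
      unfolding ipM_def[of M f] using rep i by (intro Bochner_Integration.integral_cong) auto
    have 3: "ipM M f (\<lambda>x. \<Sum>e\<in>E. ipM M (m i) e * e x) = (\<Sum>e\<in>E. ipM M (m i) e * ipM M f e)"
      using E assms(3,4) by (intro ip_sum_left_f) auto
    have 4: "ipM M P (m i) = (\<Sum>e\<in>E. ipM M f e * ipM M e (m i))"
      unfolding P_def using E mi by (intro ip_sum_left) auto
    have 5: "(\<Sum>e\<in>E. ipM M f e * ipM M e (m i)) = (\<Sum>e\<in>E. ipM M (m i) e * ipM M f e)"
    proof (rule sum.cong[OF refl])
      fix e show "ipM M f e * ipM M e (m i) = ipM M (m i) e * ipM M f e"
        using ip_sym[of e "m i"] by simp
    qed
    show ?thesis using 1 2 3 4 5 by simp
  qed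
  then show ?thesis using PV by blast
qed

lemma L_abstract:
  assumes "finite I" "\<And>i. i \<in> I \<Longrightarrow> m i \<in> V"
  shows "\<exists>K. \<forall>d. \<forall>x\<in>space M. \<bar>\<Sum>i\<in>I. d i * m i x\<bar> \<le> K * integral\<^sup>L M (\<lambda>y. \<bar>\<Sum>i\<in>I. d i * m i y\<bar>)"
proof -
  have "\<exists>E. finite E \<and> E \<subseteq> V \<and> (\<forall>e\<in>E. \<forall>e'\<in>E. ipM M e e' = (if e = e' then 1 else 0))
            \<and> (\<forall>i\<in>I. \<forall>x\<in>space M. m i x = (\<Sum>e\<in>E. ipM M (m i) e * e x))"
    by (rule GS[OF assms(1)]) (rule assms(2))
  then obtain E where E: "finite E" "E \<subseteq> V" and ON: "\<forall>e\<in>E. \<forall>e'\<in>E. ipM M e e' = (if e = e' then 1 else 0)"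
    and rep: "\<forall>i\<in>I. \<forall>x\<in>space M. m i x = (\<Sum>e\<in>E. ipM M (m i) e * e x)"
    by blast
  have "\<forall>e\<in>E. \<exists>K. \<forall>x\<in>space M. \<bar>e x\<bar> \<le> K" using E Vbdd by blast
  then obtain Kf where Kf: "\<And>e x. e \<in> E \<Longrightarrow> x \<in> space M \<Longrightarrow> \<bar>e x\<bar> \<le> Kf e" by metis
  define K where "K = (\<Sum>e\<in>E. \<bar>Kf e\<bar> * \<bar>Kf e\<bar>)"
  have "\<forall>x\<in>space M. \<bar>\<Sum>i\<in>I. d i * m i x\<bar> \<le> K * integral\<^sup>L M (\<lambda>y. \<bar>\<Sum>i\<in>I. d i * m i y\<bar>)" for d
  proof
    fix x assume x: "x \<in> space M"
    define Q where "Q = (\<lambda>x. \<Sum>i\<in>I. d i * m i x)"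
    have QV: "Q \<in> V" unfolding Q_def using assms by (intro V_sum) auto
    have Qrep: "Q x = (\<Sum>e\<in>E. ipM M Q e * e x)"
    proof -
      have "Q x = (\<Sum>i\<in>I. d i * (\<Sum>e\<in>E. ipM M (m i) e * e x))"
        unfolding Q_def using rep x by (intro sum.cong) auto
      also have "\<dots> = (\<Sum>i\<in>I. \<Sum>e\<in>E. d i * ipM M (m i) e * e x)"
        by (simp add: sum_distrib_left mult.assoc)
      also have "\<dots> = (\<Sum>e\<in>E. \<Sum>i\<in>I. d i * ipM M (m i) e * e x)"
        by (rule sum.swap)
      also have "\<dots> = (\<Sum>e\<in>E. (\<Sum>i\<in>I. d i * ipM M (m i) e) * e x)"
        by (simp add: sum_distrib_right)
      also have "\<dots> = (\<Sum>e\<in>E. ipM M Q e * e x)"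
        unfolding Q_def using assms E by (intro sum.cong refl arg_cong2[where f="(*)"] ip_sum_left[symmetric]) auto
      finally show ?thesis .
    qed
    have intQ: "integrable M Q" using V_integrable[OF QV] .
    have ipb: "\<bar>ipM M Q e\<bar> \<le> \<bar>Kf e\<bar> * integral\<^sup>L M (\<lambda>y. \<bar>Q y\<bar>)" if e: "e \<in> E" for e
    proof -
      have eV: "e \<in> V" using e E by auto
      have "integral\<^sup>L M (\<lambda>y. \<bar>Q y * e y\<bar>) \<le> integral\<^sup>L M (\<lambda>y. \<bar>Kf e\<bar> * \<bar>Q y\<bar>)"
      proof (rule integral_mono)
        show "integrable M (\<lambda>y. \<bar>Q y * e y\<bar>)" using V_integrable_mult[OF QV eV] by simp
        show "integrable M (\<lambda>y. \<bar>Kf e\<bar> * \<bar>Q y\<bar>)" using intQ by simp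
        fix y assume y: "y \<in> space M"
        have "\<bar>Q y * e y\<bar> = \<bar>Q y\<bar> * \<bar>e y\<bar>" by (simp add: abs_mult)
        also have "\<dots> \<le> \<bar>Q y\<bar> * \<bar>Kf e\<bar>" using Kf[OF e y] by (intro mult_left_mono) auto
        finally show "\<bar>Q y * e y\<bar> \<le> \<bar>Kf e\<bar> * \<bar>Q y\<bar>" by (simp add: mult.commute)
      qed
      then have "\<bar>ipM M Q e\<bar> \<le> integral\<^sup>L M (\<lambda>y. \<bar>Kf e\<bar> * \<bar>Q y\<bar>)"
        unfolding ipM_def using integral_abs_bound[of M "\<lambda>y. Q y * e y"] by linarith
      also have "\<dots> = \<bar>Kf e\<bar> * integral\<^sup>L M (\<lambda>y. \<bar>Q y\<bar>)" by simp
      finally show ?thesis .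
    qed
    have "\<bar>Q x\<bar> \<le> (\<Sum>e\<in>E. \<bar>ipM M Q e * e x\<bar>)" unfolding Qrep by (rule sum_abs)
    also have "\<dots> \<le> (\<Sum>e\<in>E. (\<bar>Kf e\<bar> * integral\<^sup>L M (\<lambda>y. \<bar>Q y\<bar>)) * \<bar>Kf e\<bar>)"
    proof (intro sum_mono)
      fix e assume e: "e \<in> E"
      have "\<bar>ipM M Q e * e x\<bar> = \<bar>ipM M Q e\<bar> * \<bar>e x\<bar>" by (simp add: abs_mult)
      also have "\<dots> \<le> (\<bar>Kf e\<bar> * integral\<^sup>L M (\<lambda>y. \<bar>Q y\<bar>)) * \<bar>Kf e\<bar>"
        using ipb[OF e] Kf[OF e x] by (intro mult_mono) auto
      finally show "\<bar>ipM M Q e * e x\<bar> \<le> (\<bar>Kf e\<bar> * integral\<^sup>L M (\<lambda>y. \<bar>Q y\<bar>)) * \<bar>Kf e\<bar>" .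
    qed
    also have "\<dots> = K * integral\<^sup>L M (\<lambda>y. \<bar>Q y\<bar>)"
      unfolding K_def sum_distrib_right by (intro sum.cong refl) (simp add: mult_ac)
    finally show "\<bar>\<Sum>i\<in>I. d i * m i x\<bar> \<le> K * integral\<^sup>L M (\<lambda>y. \<bar>\<Sum>i\<in>I. d i * m i y\<bar>)"
      by (simp add: Q_def)
  qed
  then show ?thesis by blast
qed

end

lemma emeasure_ball_pos: "r > 0 \<Longrightarrow> emeasure lebesgue (ball (c::'a::euclidean_space) r) > 0"
proof -
  assume r: "r > 0"
  have "emeasure lebesgue (ball c r) = emeasure lborel (ball c r)" by (simp add: emeasure_completion)
  also have "\<dots> = ennreal (measure lborel (ball c r))"
    using emeasure_lborel_ball_finite[of c r] by (intro emeasure_eq_ennreal_measure) (simp add: less_top)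
  also have "\<dots> > 0" using content_ball_pos[OF r] by simp
  finally show ?thesis .
qed

lemma AE_open_contra:
  assumes "AE x in lebesgue. x \<notin> U" "open U" "y \<in> U"
  shows False
proof -
  obtain \<delta> where \<delta>: "\<delta> > 0" "ball y \<delta> \<subseteq> U" using assms(2,3) open_contains_ball by blast
  have "AE x in lebesgue. x \<notin> ball y \<delta>" using assms(1) by eventually_elim (use \<delta>(2) in auto)
  then have "emeasure lebesgue (ball y \<delta>) = 0"
    by (subst (asm) AE_iff_measurable[of "ball y \<delta>"]) auto
  with emeasure_ball_pos[OF \<delta>(1), of y] show False by simp
qed

lemma ball_gsV: assumes "r > 0" shows "gsV (lebesgue_on (ball (c::'a::euclidean_space) r)) (polys k)"
proof (rule gsV.intro)
  show "finite_measure (lebesgue_on (ball c r))"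
    by (rule finite_measureI) (use emeasure_lborel_ball_finite[of c r] in \<open>simp add: emeasure_restrict_space emeasure_completion less_top\<close>)
  show "(\<lambda>x. 0) \<in> polys k" by (rule polys_zero)
  show "(\<lambda>x. a * u x + b * v x) \<in> polys k" if "u \<in> polys k" "v \<in> polys k" for u v a b
    using that by (intro polys_add polys_cmult)
  show "u \<in> borel_measurable (lebesgue_on (ball c r))" if "u \<in> polys k" for u
    using that by (intro continuous_imp_measurable_on_sets_lebesgue polys_continuous) auto
  show "\<exists>K. \<forall>x\<in>space (lebesgue_on (ball c r)). \<bar>u x\<bar> \<le> K" if "u \<in> polys k" for u
  proof -
    have "compact (u ` cball c r)"
      using that by (intro compact_continuous_image polys_continuous) auto
    then obtain K where "\<forall>y\<in>u ` cball c r. norm y \<le> K" using compact_imp_bounded bounded_iff by metis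
    then show ?thesis by (intro exI[of _ K]) auto
  qed
  show "\<forall>x\<in>space (lebesgue_on (ball c r)). u x = 0"
    if u: "u \<in> polys k" and i0: "integral\<^sup>L (lebesgue_on (ball c r)) (\<lambda>x. u x * u x) = 0" for u
  proof -
    have meas: "u \<in> borel_measurable (lebesgue_on (ball c r))"
      using u by (intro continuous_imp_measurable_on_sets_lebesgue polys_continuous) auto
    have bdd: "\<exists>K. \<forall>x\<in>space (lebesgue_on (ball c r)). \<bar>u x\<bar> \<le> K"
    proof -
      have "compact (u ` cball c r)"
        using u by (intro compact_continuous_image polys_continuous) auto
      then obtain K where "\<forall>y\<in>u ` cball c r. norm y \<le> K" using compact_imp_bounded bounded_iff by metis
      then show ?thesis by (intro exI[of _ K]) auto
    qed
    then obtain K where K: "\<forall>x\<in>ball c r. \<bar>u x\<bar> \<le> K" by auto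
    interpret finite_measure "lebesgue_on (ball c r)"
      by (rule finite_measureI) (use emeasure_lborel_ball_finite[of c r] in \<open>simp add: emeasure_restrict_space emeasure_completion less_top\<close>)
    have int: "integrable (lebesgue_on (ball c r)) (\<lambda>x. u x * u x)"
    proof (rule integrable_const_bound[where B="K * K"])
      show "AE x in lebesgue_on (ball c r). norm (u x * u x) \<le> K * K"
      proof (rule AE_I2)
        fix x assume "x \<in> space (lebesgue_on (ball c r))"
        then have ux: "\<bar>u x\<bar> \<le> K" using K by auto
        have "\<bar>u x\<bar> * \<bar>u x\<bar> \<le> K * K" using ux by (meson abs_ge_zero mult_mono order_trans)
        then show "norm (u x * u x) \<le> K * K" by (simp add: abs_mult)
      qed
    qed (use meas in simp)
    have nn: "AE x in lebesgue_on (ball c r). 0 \<le> u x * u x" by (intro AE_I2) simp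
    have "AE x in lebesgue_on (ball c r). u x * u x = 0"
      using i0 integral_nonneg_eq_0_iff_AE[OF int nn] by simp
    then have "AE x in lebesgue. x \<in> ball c r \<longrightarrow> u x * u x = 0"
      by (subst (asm) AE_restrict_space_iff) simp_all
    then have ae: "AE x in lebesgue. x \<in> ball c r \<longrightarrow> u x = 0"
      by eventually_elim simp
    show ?thesis
    proof
      fix x assume x: "x \<in> space (lebesgue_on (ball c r))"
      show "u x = 0"
      proof (rule ccontr)
        assume ne: "u x \<noteq> 0"
        let ?U = "ball c r \<inter> {y. u y \<noteq> 0}"
        have "open ?U"
          using open_Collect_neq[OF polys_continuous[OF u] continuous_on_const[of UNIV 0]]
          by (intro open_Int open_ball) auto
        moreover have "AE y in lebesgue. y \<notin> ?U" using ae by eventually_elim auto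
        moreover have "x \<in> ?U" using x ne by auto
        ultimately show False by (metis AE_open_contra)
      qed
    qed
  qed
qed


lemma LINT_ball_eq: "(LINT y:ball c r|lebesgue. (g::_\<Rightarrow>real) y) = integral\<^sup>L (lebesgue_on (ball (c::'a::euclidean_space) r)) g"
  unfolding set_lebesgue_integral_def by (rule integral_restrict_space[symmetric]) simp

lemma poly_proj_in_polys:
  fixes f :: "'a::euclidean_space \<Rightarrow> real"
  assumes r: "r > 0" and fi: "integrable (lebesgue_on (ball c r)) f"
    and fm: "f \<in> borel_measurable (lebesgue_on (ball c r))"
  shows "poly_proj k (ball c r) f \<in> polys k"
proof -
  interpret gsV "lebesgue_on (ball c r)" "polys k" by (rule ball_gsV[OF r])
  let ?M = "lebesgue_on (ball c r)"
  let ?Pr = "\<lambda>P. P \<in> polys k \<and> (\<forall>\<gamma>\<in>multi_idx k. (LINT y:ball c r|lebesgue. (f y - P y) * Defs.monom \<gamma> y) = 0)"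
  have ex: "\<exists>P\<in>polys k. \<forall>\<gamma>\<in>multi_idx k. integral\<^sup>L ?M (\<lambda>x. (f x - P x) * Defs.monom \<gamma> x) = 0"
    by (rule proj_exists[OF finite_multi_idx polys_monom fi fm])
  then obtain P where P: "?Pr P" by (auto simp: LINT_ball_eq)
  have uniq: "P2 = P" if P2: "?Pr P2" for P2
  proof -
    define D where "D = (\<lambda>x. P2 x - P x)"
    have P2p: "P2 \<in> polys k" and Pp: "P \<in> polys k" using P P2 by auto
    have DV: "D \<in> polys k" unfolding D_def using P2p Pp by (rule polys_diff)
    have ipD: "ipM ?M (Defs.monom \<gamma>) D = 0" if g: "\<gamma> \<in> multi_idx k" for \<gamma>
    proof -
      have mV: "Defs.monom \<gamma> \<in> polys k" using polys_monom[OF g] .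
      have i1: "integral\<^sup>L ?M (\<lambda>x. (f x - P x) * Defs.monom \<gamma> x) = 0"
        using P g by (auto simp: LINT_ball_eq)
      have i2: "integral\<^sup>L ?M (\<lambda>x. (f x - P2 x) * Defs.monom \<gamma> x) = 0"
        using P2 g by (auto simp: LINT_ball_eq)
      have int1: "integrable ?M (\<lambda>x. f x * Defs.monom \<gamma> x)" by (rule V_bdd_mult[OF fi fm mV])
      have int2: "integrable ?M (\<lambda>x. P x * Defs.monom \<gamma> x)" by (rule V_integrable_mult[OF Pp mV])
      have int3: "integrable ?M (\<lambda>x. P2 x * Defs.monom \<gamma> x)" by (rule V_integrable_mult[OF P2p mV])
      have "ipM ?M (Defs.monom \<gamma>) D = integral\<^sup>L ?M (\<lambda>x. (f x - P x) * Defs.monom \<gamma> x) - integral\<^sup>L ?M (\<lambda>x. (f x - P2 x) * Defs.monom \<gamma> x)"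
        unfolding ipM_def D_def using int1 int2 int3
        by (simp add: left_diff_distrib right_diff_distrib mult.commute)
      then show ?thesis using i1 i2 by simp
    qed
    obtain d where d: "D = (\<lambda>x. \<Sum>\<gamma>\<in>multi_idx k. d \<gamma> * Defs.monom \<gamma> x)" using DV by (auto simp: polys_iff)
    have "ipM ?M D D = (\<Sum>\<gamma>\<in>multi_idx k. d \<gamma> * ipM ?M (Defs.monom \<gamma>) D)"
      by (subst (1) d) (rule ip_sum_left[OF finite_multi_idx polys_monom DV])
    also have "\<dots> = 0" using ipD by simp
    finally have "integral\<^sup>L ?M (\<lambda>x. D x * D x) = 0" by (simp add: ipM_def)
    then have "\<forall>x\<in>space ?M. D x = 0" by (rule Vnd[OF DV])
    then have "\<And>y. y \<in> ball c r \<Longrightarrow> D y = 0" by simp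
    then have "D x = 0" for x by (rule polys_zero_on_ball[OF DV r])
    then show ?thesis by (auto simp: D_def)
  qed
  have "?Pr (THE P. ?Pr P)" using P uniq by (rule theI)
  then show ?thesis unfolding poly_proj_def by blast
qed

lemma nn_integral_affine_euclidean:
  fixes g :: "'a::euclidean_space \<Rightarrow> ennreal" and r :: real
  assumes g[measurable]: "g \<in> borel_measurable borel" and r: "r \<noteq> 0"
  shows "(\<integral>\<^sup>+x. g x \<partial>lborel) = ennreal (\<bar>r\<bar> ^ DIM('a)) * (\<integral>\<^sup>+z. g (c + r *\<^sub>R z) \<partial>lborel)"
  by (subst lborel_affine[OF r, of c]) (simp add: nn_integral_density nn_integral_distr nn_integral_cmult)


lemma L_ball:
  "\<exists>K\<ge>0. \<forall>Q\<in>polys k. \<forall>(c::'a::euclidean_space) r y. r > 0 \<longrightarrow> y \<in> ball c r \<longrightarrow>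
     ennreal \<bar>Q y\<bar> * emeasure lebesgue (ball c r) \<le> ennreal K * (\<integral>\<^sup>+x\<in>ball c r. ennreal \<bar>Q x\<bar> \<partial>lebesgue)"
proof -
  let ?B1 = "ball (0::'a) 1"
  let ?M = "lebesgue_on ?B1"
  interpret U: gsV ?M "polys k" by (rule ball_gsV) simp
  have "\<exists>K. \<forall>d. \<forall>x\<in>space ?M. \<bar>\<Sum>\<gamma>\<in>multi_idx k. d \<gamma> * Defs.monom \<gamma> x\<bar>
      \<le> K * integral\<^sup>L ?M (\<lambda>y. \<bar>\<Sum>\<gamma>\<in>multi_idx k. d \<gamma> * Defs.monom \<gamma> y\<bar>)"
    by (rule U.L_abstract[OF finite_multi_idx]) (rule polys_monom)
  then obtain K0 where K0: "\<And>d. \<forall>x\<in>space ?M. \<bar>\<Sum>\<gamma>\<in>multi_idx k. d \<gamma> * Defs.monom \<gamma> x\<bar>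
      \<le> K0 * integral\<^sup>L ?M (\<lambda>y. \<bar>\<Sum>\<gamma>\<in>multi_idx k. d \<gamma> * Defs.monom \<gamma> y\<bar>)"
    by blast
  define K1 where "K1 = max K0 0"
  define V1 where "V1 = emeasure lebesgue ?B1"
  have main: "\<forall>Q\<in>polys k. \<forall>(c::'a) r y. r > 0 \<longrightarrow> y \<in> ball c r \<longrightarrow>
     ennreal \<bar>Q y\<bar> * emeasure lebesgue (ball c r) \<le> (ennreal K1 * V1) * (\<integral>\<^sup>+x\<in>ball c r. ennreal \<bar>Q x\<bar> \<partial>lebesgue)"
  proof (intro ballI allI impI)
    fix Q :: "'a \<Rightarrow> real" and c :: 'a and r :: real and y :: 'a
    assume Q: "Q \<in> polys k" and r: "r > 0" and y: "y \<in> ball c r"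
    define Q' where "Q' = (\<lambda>z. Q (c + r *\<^sub>R z))"
    have Q'p: "Q' \<in> polys k" unfolding Q'_def by (rule polys_affine[OF Q])
    obtain d where d: "Q' = (\<lambda>x. \<Sum>\<gamma>\<in>multi_idx k. d \<gamma> * Defs.monom \<gamma> x)" using Q'p by (auto simp: polys_iff)
    define z where "z = (1 / r) *\<^sub>R (y - c)"
    have Qyz: "Q y = Q' z" using r by (simp add: Q'_def z_def)
    have z: "z \<in> ?B1" using y r by (simp add: z_def dist_norm norm_minus_commute)
    define I where "I = integral\<^sup>L ?M (\<lambda>y. \<bar>Q' y\<bar>)"
    have I0: "I \<ge> 0" unfolding I_def by (intro integral_nonneg_AE) auto
    have bnd: "\<bar>Q' z\<bar> \<le> K1 * I"
    proof -
      have "\<bar>Q' z\<bar> \<le> K0 * I" using K0[of d] z unfolding I_def d by auto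
      also have "\<dots> \<le> K1 * I" using I0 by (intro mult_right_mono) (auto simp: K1_def)
      finally show ?thesis .
    qed
    have intQ': "integrable ?M (\<lambda>y. \<bar>Q' y\<bar>)" using U.V_integrable[OF Q'p] by simp
    have mQ': "(\<lambda>y. \<bar>Q' y\<bar>) \<in> borel_measurable ?M" using U.Vmeas[OF Q'p] by simp
    have "ennreal I = (\<integral>\<^sup>+x. ennreal \<bar>Q' x\<bar> \<partial>?M)"
      unfolding I_def by (rule nn_integral_eq_integral[symmetric]) (use intQ' in auto)
    also have "\<dots> = (\<integral>\<^sup>+x\<in>?B1. ennreal \<bar>Q' x\<bar> \<partial>lebesgue)"
      by (subst nn_integral_restrict_space) auto
    finally have I_nn: "ennreal I = (\<integral>\<^sup>+x\<in>?B1. ennreal \<bar>Q' x\<bar> \<partial>lebesgue)" .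
    have [measurable]: "ball c r \<in> sets borel" by simp
    have [measurable]: "Q \<in> borel_measurable borel" by (rule polys_borel[OF Q])
    have Qb: "(\<lambda>x. ennreal \<bar>Q x\<bar> * indicator (ball c r) x) \<in> borel_measurable borel"
      by measurable
    have cov: "(\<integral>\<^sup>+x\<in>ball c r. ennreal \<bar>Q x\<bar> \<partial>lebesgue) = ennreal (r ^ DIM('a)) * ennreal I"
    proof -
      have "(\<integral>\<^sup>+x\<in>ball c r. ennreal \<bar>Q x\<bar> \<partial>lebesgue) = (\<integral>\<^sup>+x. ennreal \<bar>Q x\<bar> * indicator (ball c r) x \<partial>lborel)"
        by (simp add: nn_integral_completion)
      also have "\<dots> = ennreal (\<bar>r\<bar> ^ DIM('a)) * (\<integral>\<^sup>+z. ennreal \<bar>Q (c + r *\<^sub>R z)\<bar> * indicator (ball c r) (c + r *\<^sub>R z) \<partial>lborel)"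
        using r by (intro nn_integral_affine_euclidean[OF Qb]) auto
      also have "(\<lambda>z. ennreal \<bar>Q (c + r *\<^sub>R z)\<bar> * indicator (ball c r) (c + r *\<^sub>R z)) = (\<lambda>z. ennreal \<bar>Q' z\<bar> * indicator ?B1 z)"
        using r by (intro ext) (auto simp: Q'_def indicator_def dist_norm)
      also have "(\<integral>\<^sup>+z. ennreal \<bar>Q' z\<bar> * indicator ?B1 z \<partial>lborel) = ennreal I"
        by (simp add: I_nn nn_integral_completion)
      finally show ?thesis using r by simp
    qed
    have "ennreal \<bar>Q y\<bar> * emeasure lebesgue (ball c r) = ennreal \<bar>Q' z\<bar> * (ennreal (r ^ DIM('a)) * V1)"
      using r emeasure_lebesgue_ball_conv_unit_ball[of r c] by (simp add: Qyz V1_def)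
    also have "\<dots> \<le> ennreal (K1 * I) * (ennreal (r ^ DIM('a)) * V1)"
      using bnd by (intro mult_right_mono ennreal_leI) auto
    also have "\<dots> = (ennreal K1 * V1) * (ennreal (r ^ DIM('a)) * ennreal I)"
      using I0 by (simp add: ennreal_mult K1_def mult_ac)
    also have "\<dots> = (ennreal K1 * V1) * (\<integral>\<^sup>+x\<in>ball c r. ennreal \<bar>Q x\<bar> \<partial>lebesgue)" by (simp add: cov)
    finally show "ennreal \<bar>Q y\<bar> * emeasure lebesgue (ball c r) \<le> (ennreal K1 * V1) * (\<integral>\<^sup>+x\<in>ball c r. ennreal \<bar>Q x\<bar> \<partial>lebesgue)" .
  qed
  have eqK: "ennreal K1 * V1 = ennreal (K1 * measure lebesgue ?B1)"
    unfolding V1_def using emeasure_lborel_ball_finite[of "0::'a" 1]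
    by (subst emeasure_eq_ennreal_measure) (auto simp: K1_def ennreal_mult emeasure_completion less_top)
  have nonneg: "K1 * measure lebesgue ?B1 \<ge> 0" by (simp add: K1_def)
  have main': "\<forall>Q\<in>polys k. \<forall>(c::'a) r y. r > 0 \<longrightarrow> y \<in> ball c r \<longrightarrow>
     ennreal \<bar>Q y\<bar> * emeasure lebesgue (ball c r) \<le> ennreal (K1 * measure lebesgue ?B1) * (\<integral>\<^sup>+x\<in>ball c r. ennreal \<bar>Q x\<bar> \<partial>lebesgue)"
    using main unfolding eqK .
  show ?thesis using main' nonneg by blast
qed


lemma borel_to_lebesgue: "(P::'a::euclidean_space \<Rightarrow> real) \<in> borel_measurable borel \<Longrightarrow> P \<in> borel_measurable lebesgue"
  by (rule measurable_completion) simp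

lemma ennreal_mult_le_div:
  assumes "0 < m" "a * ennreal m \<le> b" shows "a \<le> ennreal (1 / m) * b"
proof -
  have "a = a * ennreal m * ennreal (1 / m)"
    using assms(1) by (simp add: mult.assoc ennreal_mult''[symmetric])
  also have "\<dots> \<le> b * ennreal (1 / m)" using assms(2) by (intro mult_right_mono) auto
  finally show ?thesis by (simp add: mult.commute)
qed

lemma ennreal_div_mult_cancel:
  assumes "0 < m" shows "ennreal (1 / m) * (S * ennreal m) = S"
proof -
  have "ennreal (1 / m) * ennreal m = 1" using assms by (simp add: ennreal_mult''[symmetric])
  have "ennreal (1 / m) * (S * ennreal m) = S * (ennreal (1 / m) * ennreal m)" by (simp only: mult_ac)
  then show ?thesis using \<open>ennreal (1 / m) * ennreal m = 1\<close> by simp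
qed

lemma nn_tri:
  fixes u v w :: "'a::euclidean_space \<Rightarrow> real"
  assumes "u \<in> borel_measurable lebesgue" "v \<in> borel_measurable lebesgue" "A \<in> sets lebesgue"
    and "\<And>x. \<bar>w x\<bar> \<le> \<bar>u x\<bar> + \<bar>v x\<bar>"
  shows "(\<integral>\<^sup>+x\<in>A. ennreal \<bar>w x\<bar> \<partial>lebesgue) \<le> (\<integral>\<^sup>+x\<in>A. ennreal \<bar>u x\<bar> \<partial>lebesgue) + (\<integral>\<^sup>+x\<in>A. ennreal \<bar>v x\<bar> \<partial>lebesgue)"
proof -
  have "(\<integral>\<^sup>+x\<in>A. ennreal \<bar>w x\<bar> \<partial>lebesgue) \<le> (\<integral>\<^sup>+x. ennreal \<bar>u x\<bar> * indicator A x + ennreal \<bar>v x\<bar> * indicator A x \<partial>lebesgue)"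
  proof (intro nn_integral_mono)
    fix x
    have "ennreal \<bar>w x\<bar> \<le> ennreal (\<bar>u x\<bar> + \<bar>v x\<bar>)" using assms(4)[of x] by (rule ennreal_leI)
    also have "\<dots> = ennreal \<bar>u x\<bar> + ennreal \<bar>v x\<bar>" by (rule ennreal_plus) auto
    finally have "ennreal \<bar>w x\<bar> \<le> ennreal \<bar>u x\<bar> + ennreal \<bar>v x\<bar>" .
    then show "ennreal \<bar>w x\<bar> * indicator A x \<le> ennreal \<bar>u x\<bar> * indicator A x + ennreal \<bar>v x\<bar> * indicator A x"
      by (auto simp: indicator_def)
  qed
  also have "\<dots> = (\<integral>\<^sup>+x\<in>A. ennreal \<bar>u x\<bar> \<partial>lebesgue) + (\<integral>\<^sup>+x\<in>A. ennreal \<bar>v x\<bar> \<partial>lebesgue)"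
    using assms(1-3) by (intro nn_integral_add) auto
  finally show ?thesis .
qed

lemma V1_pos: "measure lebesgue (ball (0::'a::euclidean_space) 1) > 0"
proof -
  have "emeasure lebesgue (ball (0::'a) 1) > 0" by (rule emeasure_ball_pos) simp
  moreover have "emeasure lebesgue (ball (0::'a) 1) = ennreal (measure lebesgue (ball (0::'a) 1))"
    using emeasure_lborel_ball_finite[of "0::'a" 1]
    by (intro emeasure_eq_ennreal_measure) (simp add: emeasure_completion less_top)
  ultimately show ?thesis by simp
qed

lemma emeasure_ball_eq:
  assumes "r \<ge> 0"
  shows "emeasure lebesgue (ball (c::'a::euclidean_space) r) = ennreal (r ^ DIM('a) * measure lebesgue (ball (0::'a) 1))"
proof -
  have "emeasure lebesgue (ball (0::'a) 1) = ennreal (measure lebesgue (ball (0::'a) 1))"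
    using emeasure_lborel_ball_finite[of "0::'a" 1]
    by (intro emeasure_eq_ennreal_measure) (simp add: emeasure_completion less_top)
  then show ?thesis
    using emeasure_lebesgue_ball_conv_unit_ball[OF assms, of c] assms by (simp add: ennreal_mult)
qed

lemma measure_ball_eq:
  assumes "r \<ge> 0"
  shows "measure lebesgue (ball (c::'a::euclidean_space) r) = r ^ DIM('a) * measure lebesgue (ball (0::'a) 1)"
  using emeasure_ball_eq[OF assms, of c] assms V1_pos[where 'a='a]
  by (simp add: measure_def)

lemma exists_dyadic:
  assumes "0 < r" "r < 1"
  shows "\<exists>j. (1/2::real) ^ Suc j < r \<and> r \<le> (1/2) ^ j"
proof -
  obtain N where N: "(1/2::real) ^ N < r" using real_arch_pow_inv[OF assms(1), of "1/2"] by auto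
  define j0 where "j0 = (LEAST N. (1/2::real) ^ N < r)"
  have j0: "(1/2::real) ^ j0 < r" unfolding j0_def by (rule LeastI[of _ N]) (rule N)
  have "j0 \<noteq> 0" proof assume "j0 = 0" then show False using j0 assms by simp qed
  then obtain j where j: "j0 = Suc j" by (cases j0) auto
  have "j < j0" using j by simp
  then have nl: "\<not> (1/2::real) ^ j < r" unfolding j0_def by (rule not_less_Least)
  show ?thesis
  proof (intro exI conjI)
    show "(1/2::real) ^ Suc j < r" using j0 j by simp
    show "r \<le> (1/2::real) ^ j" using nl by simp
  qed
qed


lemma maximal_pointwise:
  fixes f :: "'a::euclidean_space \<Rightarrow> real" and x :: 'a and K :: real and Y :: ennreal
  assumes fm: "f \<in> borel_measurable lebesgue"
  and loc: "\<And>c r. r > 0 \<Longrightarrow> integrable (lebesgue_on (ball c r)) f"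
  and K0: "K \<ge> 0"
  and KL: "\<forall>Q\<in>polys k. \<forall>(c::'a) r y. r > 0 \<longrightarrow> y \<in> ball c r \<longrightarrow>
     ennreal \<bar>Q y\<bar> * emeasure lebesgue (ball c r) \<le> ennreal K * (\<integral>\<^sup>+x\<in>ball c r. ennreal \<bar>Q x\<bar> \<partial>lebesgue)"
  and Y: "\<And>r. r \<ge> 1 \<Longrightarrow> (\<integral>\<^sup>+y\<in>ball x r. ennreal \<bar>f y\<bar> \<partial>lebesgue) / emeasure lebesgue (ball x r) \<le> Y"
  shows "maximal f x \<le> ennreal (2 ^ DIM('a) * K + 1) * Y + ennreal (2 ^ DIM('a) * (K * (2 ^ DIM('a) + 2) + 1)) *
     (\<Sum>j. ennreal (1 / measure lebesgue (ball x ((1/2)^j))) *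
        (\<integral>\<^sup>+y\<in>ball x ((1/2)^j). ennreal \<bar>f y - poly_proj k (ball x ((1/2)^j)) f y\<bar> \<partial>lebesgue))"
proof -
  define n where "n = DIM('a)"
  define V1 where "V1 = measure lebesgue (ball (0::'a) 1)"
  have V1: "V1 > 0" unfolding V1_def by (rule V1_pos)
  define \<rho> where "\<rho> j = (1/2::real) ^ j" for j
  define B where "B j = ball x (\<rho> j)" for j
  define mm where "mm j = \<rho> j ^ n * V1" for j
  define P where "P j = poly_proj k (B j) f" for j
  define D where "D j = (\<integral>\<^sup>+y\<in>B j. ennreal \<bar>f y - P j y\<bar> \<partial>lebesgue)" for j
  define F where "F j = (\<integral>\<^sup>+y\<in>B j. ennreal \<bar>f y\<bar> \<partial>lebesgue)" for j
  define e where "e j = ennreal (1 / mm j) * D j" for j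
  define T where "T = (\<Sum>j. e j)"
  have \<rho>pos: "\<rho> j > 0" for j by (simp add: \<rho>_def)
  have mmpos: "mm j > 0" for j using V1 \<rho>pos[of j] by (simp add: mm_def)
  have mm_measure: "measure lebesgue (B j) = mm j" for j
    unfolding B_def mm_def V1_def n_def using \<rho>pos[of j] by (intro measure_ball_eq) auto
  have emB: "emeasure lebesgue (B j) = ennreal (mm j)" for j
    unfolding B_def mm_def V1_def n_def using \<rho>pos[of j] by (intro emeasure_ball_eq) auto
  have mm_Suc: "mm j = 2 ^ n * mm (Suc j)" for j
    by (simp add: mm_def \<rho>_def power_mult_distrib[symmetric] power_commutes)
  have BSuc: "B (Suc j) \<subseteq> B j" for j unfolding B_def \<rho>_def by (intro subset_ball) simp
  have Pp: "P j \<in> polys k" for j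
    unfolding P_def B_def
    by (rule poly_proj_in_polys[OF \<rho>pos loc[OF \<rho>pos]]) (rule measurable_restrict_space1[OF fm])
  have Pm: "P j \<in> borel_measurable lebesgue" for j by (rule borel_to_lebesgue[OF polys_borel[OF Pp]])
  have L: "ennreal \<bar>Q y\<bar> * ennreal (mm j) \<le> ennreal K * (\<integral>\<^sup>+z\<in>B j. ennreal \<bar>Q z\<bar> \<partial>lebesgue)"
    if "Q \<in> polys k" "y \<in> B j" for Q y j
    using KL that \<rho>pos[of j] unfolding emB[symmetric] B_def by blast
  have Bs: "B j \<in> sets lebesgue" for j by (simp add: B_def)
  have fPm: "(\<lambda>y. f y - P j y) \<in> borel_measurable lebesgue" for j using fm Pm[of j] by simp
  
  define S where "S j = ennreal K * (ennreal (1 / mm 0) * F 0 + e 0) + ennreal K * (\<Sum>i<j. ennreal (2 ^ n) * e i + e (Suc i))" for j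
  have claim_a: "\<forall>y\<in>B j. ennreal \<bar>P j y\<bar> \<le> S j" for j
  proof (induction j)
    case 0
    show ?case
    proof
      fix y assume y: "y \<in> B 0"
      have "ennreal \<bar>P 0 y\<bar> * ennreal (mm 0) \<le> ennreal K * (\<integral>\<^sup>+z\<in>B 0. ennreal \<bar>P 0 z\<bar> \<partial>lebesgue)"
        by (rule L[OF Pp y])
      also have "\<dots> \<le> ennreal K * (F 0 + D 0)"
        unfolding F_def D_def by (intro mult_left_mono nn_tri fm fPm Bs) auto
      finally have "ennreal \<bar>P 0 y\<bar> \<le> ennreal (1 / mm 0) * (ennreal K * (F 0 + D 0))"
        by (rule ennreal_mult_le_div[OF mmpos])
      also have "\<dots> = S 0" by (simp add: S_def e_def algebra_simps)
      finally show "ennreal \<bar>P 0 y\<bar> \<le> S 0" .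
    qed
  next
    case (Suc j)
    show ?case
    proof
      fix y assume y: "y \<in> B (Suc j)"
      then have yj: "y \<in> B j" using BSuc by blast
      define Q where "Q = (\<lambda>z. P (Suc j) z - P j z)"
      have Qp: "Q \<in> polys k" unfolding Q_def by (intro polys_diff Pp)
      have "ennreal \<bar>Q y\<bar> * ennreal (mm (Suc j)) \<le> ennreal K * (\<integral>\<^sup>+z\<in>B (Suc j). ennreal \<bar>Q z\<bar> \<partial>lebesgue)"
        by (rule L[OF Qp y])
      also have "\<dots> \<le> ennreal K * (D (Suc j) + (\<integral>\<^sup>+z\<in>B (Suc j). ennreal \<bar>f z - P j z\<bar> \<partial>lebesgue))"
        unfolding D_def by (intro mult_left_mono nn_tri fPm Bs) (auto simp: Q_def)
      also have "(\<integral>\<^sup>+z\<in>B (Suc j). ennreal \<bar>f z - P j z\<bar> \<partial>lebesgue) \<le> D j"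
        unfolding D_def by (intro nn_set_integral_set_mono BSuc)
      finally have "ennreal \<bar>Q y\<bar> * ennreal (mm (Suc j)) \<le> ennreal K * (D (Suc j) + D j)"
        by (simp add: mult_left_mono add_left_mono)
      then have Qb: "ennreal \<bar>Q y\<bar> \<le> ennreal (1 / mm (Suc j)) * (ennreal K * (D (Suc j) + D j))"
        by (rule ennreal_mult_le_div[OF mmpos])
      have "ennreal (1 / mm (Suc j)) = ennreal (2 ^ n) * ennreal (1 / mm j)"
        using mmpos[of "Suc j"] by (simp add: mm_Suc[of j] ennreal_mult''[symmetric])
      then have Qb': "ennreal \<bar>Q y\<bar> \<le> ennreal K * (ennreal (2 ^ n) * e j + e (Suc j))"
        using Qb by (simp add: e_def algebra_simps)
      have "ennreal \<bar>P (Suc j) y\<bar> \<le> ennreal \<bar>P j y\<bar> + ennreal \<bar>Q y\<bar>"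
      proof -
        have "ennreal \<bar>P (Suc j) y\<bar> \<le> ennreal (\<bar>P j y\<bar> + \<bar>Q y\<bar>)" by (intro ennreal_leI) (auto simp: Q_def)
        also have "\<dots> = ennreal \<bar>P j y\<bar> + ennreal \<bar>Q y\<bar>" by (rule ennreal_plus) auto
        finally show ?thesis .
      qed
      also have "\<dots> \<le> S j + ennreal K * (ennreal (2 ^ n) * e j + e (Suc j))"
        using Suc.IH yj Qb' by (intro add_mono) auto
      also have "\<dots> = S (Suc j)" by (simp add: S_def algebra_simps)
      finally show "ennreal \<bar>P (Suc j) y\<bar> \<le> S (Suc j)" .
    qed
  qed
  
  have claim_b: "ennreal (1 / mm j) * F j \<le> e j + S j" for j
  proof -
    have "F j \<le> D j + (\<integral>\<^sup>+y\<in>B j. ennreal \<bar>P j y\<bar> \<partial>lebesgue)"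
      unfolding F_def D_def by (intro nn_tri fPm Pm Bs) auto
    also have "(\<integral>\<^sup>+y\<in>B j. ennreal \<bar>P j y\<bar> \<partial>lebesgue) \<le> (\<integral>\<^sup>+y\<in>B j. S j \<partial>lebesgue)"
      using claim_a[of j] by (intro nn_integral_mono) (auto simp: indicator_def)
    also have "\<dots> = S j * ennreal (mm j)" by (simp add: nn_integral_cmult_indicator[OF Bs] emB)
    finally have "F j \<le> D j + S j * ennreal (mm j)" by (simp add: add_left_mono)
    then have "ennreal (1 / mm j) * F j \<le> ennreal (1 / mm j) * (D j + S j * ennreal (mm j))"
      by (rule mult_left_mono) simp
    also have "\<dots> = e j + S j" using ennreal_div_mult_cancel[OF mmpos[of j], of "S j"]
      by (simp add: e_def distrib_left)
    finally show ?thesis .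
  qed
  
  have eT: "e j \<le> T" for j
  proof -
    have "(\<Sum>i<Suc j. e i) \<le> T" unfolding T_def by (intro sum_le_suminf summableI) auto
    moreover have "e j \<le> (\<Sum>i<Suc j. e i)" by simp
    ultimately show ?thesis by (rule order_trans[rotated])
  qed
  have sT1: "(\<Sum>i<j. e i) \<le> T" for j unfolding T_def by (intro sum_le_suminf summableI) auto
  have sT2: "(\<Sum>i<j. e (Suc i)) \<le> T" for j
  proof -
    have "(\<Sum>i<j. e (Suc i)) \<le> e 0 + (\<Sum>i<j. e (Suc i))" by simp
    also have "\<dots> = (\<Sum>i<Suc j. e i)" by (rule sum.lessThan_Suc_shift[symmetric])
    also have "\<dots> \<le> T" unfolding T_def by (intro sum_le_suminf summableI) auto
    finally show ?thesis .
  qed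
  have F0Y: "ennreal (1 / mm 0) * F 0 \<le> Y"
  proof -
    have "F 0 / emeasure lebesgue (B 0) \<le> Y" unfolding F_def B_def \<rho>_def using Y[of 1] by simp
    moreover have "F 0 / emeasure lebesgue (B 0) = ennreal (1 / mm 0) * F 0"
      using mmpos[of 0] by (simp add: emB divide_ennreal_def inverse_ennreal mult.commute divide_inverse)
    ultimately show ?thesis by simp
  qed
  have claim_c: "e j + S j \<le> ennreal K * Y + ennreal (K * (2 ^ n + 2) + 1) * T" for j
  proof -
    have "e j + S j \<le> T + (ennreal K * (Y + T) + ennreal K * (ennreal (2 ^ n) * T + T))"
    proof -
      have "(\<Sum>i<j. ennreal (2 ^ n) * e i + e (Suc i)) = ennreal (2 ^ n) * (\<Sum>i<j. e i) + (\<Sum>i<j. e (Suc i))"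
        by (simp add: sum.distrib sum_distrib_left)
      also have "\<dots> \<le> ennreal (2 ^ n) * T + T" using sT1 sT2 by (intro add_mono mult_left_mono) auto
      finally have s: "(\<Sum>i<j. ennreal (2 ^ n) * e i + e (Suc i)) \<le> ennreal (2 ^ n) * T + T" .
      show ?thesis unfolding S_def
        using eT[of j] eT[of 0] F0Y s by (intro add_mono mult_left_mono) auto
    qed
    also have "\<dots> = ennreal K * Y + ennreal (K * (2 ^ n + 2) + 1) * T"
    proof -
      have e1: "ennreal (K * (2 ^ n + 2) + 1) = ennreal (K * (2 ^ n + 2)) + ennreal 1"
        by (rule ennreal_plus) (use K0 in auto)
      have e2: "ennreal (K * (2 ^ n + 2)) = ennreal K * ennreal (2 ^ n + 2)"
        by (rule ennreal_mult) (use K0 in auto)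
      have e3: "ennreal (2 ^ n + 2) = ennreal (2 ^ n) + ennreal 2"
        by (rule ennreal_plus) auto
      have "ennreal (K * (2 ^ n + 2) + 1) = ennreal K * ennreal (2 ^ n) + ennreal K + ennreal K + 1"
        unfolding e1 e2 e3 by (simp add: algebra_simps mult_2_right)
      then show ?thesis by (simp add: algebra_simps)
    qed
    finally show ?thesis .
  qed
  
  define R where "R = ennreal (2 ^ n * K + 1) * Y + ennreal (2 ^ n * (K * (2 ^ n + 2) + 1)) * T"
  have ratio: "(\<integral>\<^sup>+y\<in>ball x r. ennreal \<bar>f y\<bar> \<partial>lebesgue) / emeasure lebesgue (ball x r) \<le> R"
    if r: "r > 0" for r
  proof (cases "r \<ge> 1")
    case True
    then have "(\<integral>\<^sup>+y\<in>ball x r. ennreal \<bar>f y\<bar> \<partial>lebesgue) / emeasure lebesgue (ball x r) \<le> Y" by (rule Y)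
    also have "Y \<le> R"
    proof -
      have "Y = ennreal 1 * Y" by simp
      also have "\<dots> \<le> ennreal (2 ^ n * K + 1) * Y" using K0 by (intro mult_right_mono ennreal_leI) auto
      finally show ?thesis unfolding R_def by (simp add: add_increasing2)
    qed
    finally show ?thesis .
  next
    case False
    then obtain j where j: "\<rho> (Suc j) < r" "r \<le> \<rho> j" using exists_dyadic[OF r] unfolding \<rho>_def by force
    have emr: "emeasure lebesgue (ball x r) = ennreal (r ^ n * V1)"
      unfolding n_def V1_def using r by (intro emeasure_ball_eq) auto
    have rpos: "r ^ n * V1 > 0" using r V1 by simp
    have "(\<integral>\<^sup>+y\<in>ball x r. ennreal \<bar>f y\<bar> \<partial>lebesgue) \<le> F j"
      unfolding F_def B_def using j by (intro nn_set_integral_set_mono subset_ball) auto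
    then have "(\<integral>\<^sup>+y\<in>ball x r. ennreal \<bar>f y\<bar> \<partial>lebesgue) / emeasure lebesgue (ball x r) \<le> F j * ennreal (1 / (r ^ n * V1))"
      using rpos by (simp add: emr divide_ennreal_def inverse_ennreal divide_inverse mult_right_mono)
    also have "\<dots> \<le> F j * ennreal (2 ^ n / mm j)"
    proof (intro mult_left_mono ennreal_leI)
      have "mm j / 2 ^ n \<le> r ^ n * V1"
        using mm_Suc[of j] j(1) \<rho>pos[of "Suc j"] V1 by (auto simp: mm_def intro!: mult_right_mono power_mono)
      then show "1 / (r ^ n * V1) \<le> 2 ^ n / mm j"
        using mmpos[of j] rpos by (simp add: field_simps)
    qed simp
    also have "\<dots> = ennreal (2 ^ n) * (ennreal (1 / mm j) * F j)"
      using mmpos[of j] by (simp add: ennreal_mult''[symmetric] mult_ac)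
    also have "\<dots> \<le> ennreal (2 ^ n) * (ennreal K * Y + ennreal (K * (2 ^ n + 2) + 1) * T)"
      using claim_b[of j] claim_c[of j] by (intro mult_left_mono) auto
    also have "\<dots> \<le> R"
    proof -
      have "ennreal (2 ^ n) * (ennreal K * Y + ennreal (K * (2 ^ n + 2) + 1) * T)
          = ennreal (2 ^ n * K) * Y + ennreal (2 ^ n * (K * (2 ^ n + 2) + 1)) * T"
      proof -
        have m1: "ennreal (2 ^ n * K) = ennreal (2 ^ n) * ennreal K" by (rule ennreal_mult) (use K0 in auto)
        have m2: "ennreal (2 ^ n * (K * (2 ^ n + 2) + 1)) = ennreal (2 ^ n) * ennreal (K * (2 ^ n + 2) + 1)"
          by (rule ennreal_mult) (use K0 in auto)
        show ?thesis unfolding m1 m2 by (simp only: distrib_left mult.assoc)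
      qed
      also have "\<dots> \<le> R" unfolding R_def using K0
        by (intro add_mono mult_right_mono ennreal_leI) auto
      finally show ?thesis .
    qed
    finally show ?thesis .
  qed
  have "maximal f x \<le> R" unfolding maximal_def by (intro SUP_least ratio) auto
  moreover have eq: "measure lebesgue (ball x ((1/2)^j)) = mm j" for j
    using mm_measure[of j] unfolding B_def \<rho>_def .
  moreover have "(\<Sum>j. ennreal (1 / measure lebesgue (ball x ((1/2)^j))) *
        (\<integral>\<^sup>+y\<in>ball x ((1/2)^j). ennreal \<bar>f y - poly_proj k (ball x ((1/2)^j)) f y\<bar> \<partial>lebesgue)) = T"
    unfolding T_def e_def D_def P_def B_def \<rho>_def eq ..
  ultimately show ?thesis unfolding R_def n_def by simp
qed


lemma young_lam:
  fixes p l t :: real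
  assumes p: "p > 1" and l: "l > 0" and t: "t \<ge> 0"
  shows "t \<le> t powr p / (p * l powr (p - 1)) + l"
proof (cases "t = 0")
  case True then show ?thesis using l p by simp
next
  case False
  then have t0: "t > 0" using t by simp
  define a where "a = t powr p / l powr (p - 1)"
  have a0: "a > 0" unfolding a_def using t0 l by simp
  have "a powr (1/p) = (t powr p) powr (1/p) / (l powr (p - 1)) powr (1/p)"
    unfolding a_def using t0 l by (simp add: powr_divide)
  also have "(t powr p) powr (1/p) = t" using p t0 by (simp add: powr_powr)
  also have "(l powr (p - 1)) powr (1/p) = l powr ((p - 1) / p)" using l by (simp add: powr_powr)
  finally have ap: "a powr (1/p) = t / l powr ((p - 1) / p)" .
  have lp: "l powr (1 - 1/p) = l powr ((p - 1) / p)" using p by (simp add: diff_divide_distrib)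
  have "a powr (1/p) * l powr (1 - 1/p) \<le> (1/p) * a + (1 - 1/p) * l"
    using p a0 l by (intro Youngs_inequality_0) auto
  moreover have "a powr (1/p) * l powr (1 - 1/p) = t" unfolding ap lp using l by simp
  moreover have "(1/p) * a = t powr p / (p * l powr (p - 1))" unfolding a_def by simp
  moreover have "(1 - 1/p) * l \<le> l" using p l by (simp add: field_simps)
  ultimately show ?thesis by linarith
qed

lemma avg_bound:
  fixes f :: "'a::euclidean_space \<Rightarrow> real"
  assumes p: "p > 1" and fm: "f \<in> borel_measurable lebesgue"
    and fi: "integrable lebesgue (\<lambda>x. \<bar>f x\<bar> powr p)" and l: "l > 0" and r: "r \<ge> 1"
  shows "(\<integral>\<^sup>+y\<in>ball x r. ennreal \<bar>f y\<bar> \<partial>lebesgue) / emeasure lebesgue (ball x r)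
     \<le> ennreal ((\<integral>y. \<bar>f y\<bar> powr p \<partial>lebesgue) / (measure lebesgue (ball (0::'a) 1) * (p * l powr (p - 1))) + l)"
proof -
  define V1 where "V1 = measure lebesgue (ball (0::'a) 1)"
  have V1: "V1 > 0" unfolding V1_def by (rule V1_pos)
  define c where "c = p * l powr (p - 1)"
  have c: "c > 0" unfolding c_def using p l by simp
  define NF where "NF = (\<integral>y. \<bar>f y\<bar> powr p \<partial>lebesgue)"
  have NF: "NF \<ge> 0" unfolding NF_def by (intro integral_nonneg_AE) auto
  define m where "m = r ^ DIM('a) * V1"
  have m: "m \<ge> V1" using r V1 by (simp add: m_def)
  have mpos: "m > 0" using m V1 by simp
  have emB: "emeasure lebesgue (ball x r) = ennreal m"
    unfolding m_def V1_def using r by (intro emeasure_ball_eq) auto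
  note fm[measurable]
  have [measurable]: "ball x r \<in> sets lebesgue" by simp
  have fpm: "(\<lambda>y. \<bar>f y\<bar> powr p / c) \<in> borel_measurable lebesgue" by measurable
  have m1: "(\<lambda>y. ennreal (\<bar>f y\<bar> powr p / c) * indicator (ball x r) y) \<in> borel_measurable lebesgue" by measurable
  have m2: "(\<lambda>y. ennreal l * indicator (ball x r) y) \<in> borel_measurable lebesgue" by measurable
  have "(\<integral>\<^sup>+y\<in>ball x r. ennreal \<bar>f y\<bar> \<partial>lebesgue) \<le> (\<integral>\<^sup>+y\<in>ball x r. ennreal (\<bar>f y\<bar> powr p / c + l) \<partial>lebesgue)"
  proof (intro nn_integral_mono)
    fix y
    have "\<bar>f y\<bar> \<le> \<bar>f y\<bar> powr p / c + l" unfolding c_def by (rule young_lam[OF p l]) simp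
    then show "ennreal \<bar>f y\<bar> * indicator (ball x r) y \<le> ennreal (\<bar>f y\<bar> powr p / c + l) * indicator (ball x r) y"
      by (auto simp: indicator_def intro: ennreal_leI)
  qed
  also have "\<dots> = (\<integral>\<^sup>+y\<in>ball x r. ennreal (\<bar>f y\<bar> powr p / c) \<partial>lebesgue) + (\<integral>\<^sup>+y\<in>ball x r. ennreal l \<partial>lebesgue)"
    using c l by (subst nn_integral_add[symmetric, OF m1 m2]) (auto simp: ennreal_plus distrib_right intro!: nn_integral_cong)
  also have "(\<integral>\<^sup>+y\<in>ball x r. ennreal l \<partial>lebesgue) = ennreal (l * m)"
    using l mpos by (simp add: nn_integral_cmult_indicator emB ennreal_mult)
  also have "(\<integral>\<^sup>+y\<in>ball x r. ennreal (\<bar>f y\<bar> powr p / c) \<partial>lebesgue) \<le> (\<integral>\<^sup>+y. ennreal (\<bar>f y\<bar> powr p / c) \<partial>lebesgue)"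
    by (intro nn_integral_mono) (auto simp: indicator_def)
  also have "(\<integral>\<^sup>+y. ennreal (\<bar>f y\<bar> powr p / c) \<partial>lebesgue) = ennreal (NF / c)"
    unfolding NF_def using fi c by (subst nn_integral_eq_integral) auto
  finally have num: "(\<integral>\<^sup>+y\<in>ball x r. ennreal \<bar>f y\<bar> \<partial>lebesgue) \<le> ennreal (NF / c + l * m)"
    using NF c l mpos by (simp add: ennreal_plus add_right_mono)
  have "(\<integral>\<^sup>+y\<in>ball x r. ennreal \<bar>f y\<bar> \<partial>lebesgue) / emeasure lebesgue (ball x r) \<le> ennreal (NF / c + l * m) / ennreal m"
    unfolding emB divide_ennreal_def by (intro mult_right_mono num) simp
  also have "\<dots> = ennreal ((NF / c + l * m) / m)" using NF c l mpos by (intro divide_ennreal) auto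
  also have "\<dots> \<le> ennreal (NF / (V1 * c) + l)"
  proof (intro ennreal_leI)
    have "(NF / c + l * m) / m = NF / (c * m) + l" using mpos c by (simp add: field_simps)
    also have "NF / (c * m) \<le> NF / (c * V1)" using NF c V1 m by (intro divide_left_mono mult_left_mono) auto
    finally show "(NF / c + l * m) / m \<le> NF / (V1 * c) + l" by (simp add: mult.commute)
  qed
  finally show ?thesis unfolding V1_def c_def NF_def .
qed


lemma cs_ball_bound:
  assumes "\<rho> > 0"
  shows "emeasure \<mu> (ball y \<rho>) \<le> cs s \<mu> * ennreal (\<rho> powr s)"
proof -
  have t: "\<rho> powr s > 0" using assms by simp
  have "emeasure \<mu> (ball y \<rho>) / ennreal (\<rho> powr s) \<le> cs s \<mu>"
    unfolding cs_def by (rule SUP_upper2[of "(y, \<rho>)"]) (use assms in auto)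
  then have "emeasure \<mu> (ball y \<rho>) / ennreal (\<rho> powr s) * ennreal (\<rho> powr s) \<le> cs s \<mu> * ennreal (\<rho> powr s)"
    by (rule mult_right_mono) simp
  moreover have "emeasure \<mu> (ball y \<rho>) / ennreal (\<rho> powr s) * ennreal (\<rho> powr s) = emeasure \<mu> (ball y \<rho>)"
  proof -
    have "ennreal (1 / \<rho> powr s) * ennreal (\<rho> powr s) = 1" using t by (simp add: ennreal_mult''[symmetric])
    then show ?thesis using t by (simp add: divide_ennreal_def inverse_ennreal divide_inverse mult.assoc)
  qed
  ultimately show ?thesis by simp
qed

lemma tonelli_ball:
  fixes \<mu> :: "'a::euclidean_space measure" and Gb :: "'a \<Rightarrow> real"
  assumes sets_mu: "sets \<mu> = sets borel" and sf: "sigma_finite_measure \<mu>"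
    and Gb: "Gb \<in> borel_measurable borel" and \<rho>: "\<rho> > 0"
    and Cmu: "\<And>y. emeasure \<mu> (ball y \<rho>) \<le> C"
  shows "(\<lambda>x. \<integral>\<^sup>+y. ennreal (Gb y) * indicator (ball x \<rho>) y \<partial>lborel) \<in> borel_measurable \<mu>"
    and "(\<integral>\<^sup>+x. (\<integral>\<^sup>+y. ennreal (Gb y) * indicator (ball x \<rho>) y \<partial>lborel) \<partial>\<mu>) \<le> C * (\<integral>\<^sup>+y. ennreal (Gb y) \<partial>lborel)"
proof -
  interpret \<mu>: sigma_finite_measure \<mu> by (rule sf)
  interpret pair_sigma_finite \<mu> lborel by unfold_locales
  define F where "F = (\<lambda>z::'a \<times> 'a. ennreal (Gb (snd z)) * indicator {z. dist (fst z) (snd z) < \<rho>} z)"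
  have opn: "open {z::'a \<times> 'a. dist (fst z) (snd z) < \<rho>}"
    by (intro open_Collect_less continuous_intros)
  have sb: "{z::'a \<times> 'a. dist (fst z) (snd z) < \<rho>} \<in> sets borel" using opn by (rule borel_open)
  have seq: "sets (\<mu> \<Otimes>\<^sub>M lborel) = sets (borel :: ('a \<times> 'a) measure)"
  proof -
    have "sets (\<mu> \<Otimes>\<^sub>M lborel) = sets (borel \<Otimes>\<^sub>M borel)"
      by (rule sets_pair_measure_cong) (simp_all add: sets_mu)
    then show ?thesis unfolding borel_prod .
  qed
  have [measurable]: "{z::'a \<times> 'a. dist (fst z) (snd z) < \<rho>} \<in> sets (\<mu> \<Otimes>\<^sub>M lborel)"
    using sb seq by simp
  have [measurable]: "Gb \<in> borel_measurable lborel" using Gb by simp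
  have Fm: "F \<in> borel_measurable (\<mu> \<Otimes>\<^sub>M lborel)" unfolding F_def by measurable
  have Feq: "F (x, y) = ennreal (Gb y) * indicator (ball x \<rho>) y" for x y
    by (simp add: F_def indicator_def mem_ball)
  have Fm': "(\<lambda>(x, y). ennreal (Gb y) * indicator (ball x \<rho>) y) \<in> borel_measurable (\<mu> \<Otimes>\<^sub>M lborel)"
    using Fm by (simp add: Feq[symmetric] case_prod_beta' cong: measurable_cong)
  show "(\<lambda>x. \<integral>\<^sup>+y. ennreal (Gb y) * indicator (ball x \<rho>) y \<partial>lborel) \<in> borel_measurable \<mu>"
    using lborel.borel_measurable_nn_integral_fst[OF Fm] by (simp add: Feq)
  have "(\<integral>\<^sup>+x. (\<integral>\<^sup>+y. ennreal (Gb y) * indicator (ball x \<rho>) y \<partial>lborel) \<partial>\<mu>)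
      = (\<integral>\<^sup>+y. (\<integral>\<^sup>+x. ennreal (Gb y) * indicator (ball x \<rho>) y \<partial>\<mu>) \<partial>lborel)"
    by (rule Fubini'[OF Fm', symmetric])
  also have "\<dots> = (\<integral>\<^sup>+y. ennreal (Gb y) * emeasure \<mu> (ball y \<rho>) \<partial>lborel)"
  proof (intro nn_integral_cong)
    fix y
    have "(\<lambda>x. ennreal (Gb y) * indicator (ball x \<rho>) y) = (\<lambda>x. ennreal (Gb y) * indicator (ball y \<rho>) x)"
      by (intro ext) (simp add: indicator_def mem_ball dist_commute)
    then show "(\<integral>\<^sup>+x. ennreal (Gb y) * indicator (ball x \<rho>) y \<partial>\<mu>) = ennreal (Gb y) * emeasure \<mu> (ball y \<rho>)"
      using sets_mu by (simp add: nn_integral_cmult_indicator)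
  qed
  also have "\<dots> \<le> (\<integral>\<^sup>+y. C * ennreal (Gb y) \<partial>lborel)"
  proof (intro nn_integral_mono)
    fix y
    have "ennreal (Gb y) * emeasure \<mu> (ball y \<rho>) \<le> ennreal (Gb y) * C" using Cmu[of y] by (rule mult_left_mono) simp
    then show "ennreal (Gb y) * emeasure \<mu> (ball y \<rho>) \<le> C * ennreal (Gb y)" by (simp add: mult.commute)
  qed
  also have "\<dots> = C * (\<integral>\<^sup>+y. ennreal (Gb y) \<partial>lborel)"
    by (rule nn_integral_cmult) measurable
  finally show "(\<integral>\<^sup>+x. (\<integral>\<^sup>+y. ennreal (Gb y) * indicator (ball x \<rho>) y \<partial>lborel) \<partial>\<mu>) \<le> C * (\<integral>\<^sup>+y. ennreal (Gb y) \<partial>lborel)" .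
qed


lemma e_bound:
  fixes f :: "'a::euclidean_space \<Rightarrow> real" and x :: 'a and \<rho> l p \<alpha> :: real and Gb :: "'a \<Rightarrow> real"
  assumes p: "p > 1" and \<rho>: "\<rho> > 0" and l: "l > 0"
  and gfin: "AE y in lebesgue. sharp_max \<alpha> f y < \<infinity>"
  and Gb: "Gb \<in> borel_measurable borel" "\<And>y. Gb y \<ge> 0"
  and Gae: "AE y in lebesgue. Gb y = \<bar>enn2real (sharp_max \<alpha> f y)\<bar> powr p"
  shows "ennreal (1 / measure lebesgue (ball x \<rho>)) * (\<integral>\<^sup>+y\<in>ball x \<rho>. ennreal \<bar>f y - poly_proj (nat \<lfloor>\<alpha>\<rfloor>) (ball x \<rho>) f y\<bar> \<partial>lebesgue)
    \<le> ennreal (measure lebesgue (ball x \<rho>) powr (\<alpha> / DIM('a)) / measure lebesgue (ball x \<rho>)) *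
      (ennreal (1 / (p * l powr (p - 1))) * (\<integral>\<^sup>+y. ennreal (Gb y) * indicator (ball x \<rho>) y \<partial>lborel)
        + ennreal (l * measure lebesgue (ball x \<rho>)))"
proof -
  define n where "n = real DIM('a)"
  define B where "B = ball x \<rho>"
  define m where "m = measure lebesgue B"
  have m: "m > 0" unfolding m_def B_def using measure_ball_eq[of \<rho> x] \<rho> V1_pos[where 'a='a] by simp
  have emB: "emeasure lebesgue B = ennreal m"
    unfolding m_def B_def using emeasure_ball_eq[of \<rho> x] measure_ball_eq[of \<rho> x] \<rho> by simp
  define c where "c = p * l powr (p - 1)"
  have c: "c > 0" unfolding c_def using p l by simp
  define g where "g = sharp_max \<alpha> f"
  define D where "D = (\<integral>\<^sup>+y\<in>B. ennreal \<bar>f y - poly_proj (nat \<lfloor>\<alpha>\<rfloor>) B f y\<bar> \<partial>lebesgue)"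
  define e where "e = ennreal (1 / m) * D"
  define w where "w = m powr (\<alpha> / n)"
  have w: "w > 0" unfolding w_def using m by simp
  have sharp: "ennreal (m powr (- \<alpha> / n) / m) * D \<le> g y" if y: "y \<in> B" for y
    unfolding g_def sharp_max_def m_def D_def n_def
    by (rule SUP_upper2[of "(x, \<rho>)"]) (use y \<rho> in \<open>auto simp: B_def\<close>)
  have eq1: "ennreal (1 / m) = ennreal w * ennreal (m powr (- \<alpha> / n) / m)"
  proof -
    have "w * (m powr (- \<alpha> / n) / m) = (m powr (\<alpha> / n) * m powr (- \<alpha> / n)) / m" by (simp add: w_def)
    also have "m powr (\<alpha> / n) * m powr (- \<alpha> / n) = 1" using m by (simp add: powr_add[symmetric])
    finally have "w * (m powr (- \<alpha> / n) / m) = 1 / m" by simp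
    then show ?thesis using w m by (simp add: ennreal_mult[symmetric])
  qed
  have ae: "AE y in lebesgue. e * indicator B y \<le> ennreal w * ennreal (Gb y / c + l) * indicator B y"
    using gfin Gae
  proof eventually_elim
    case (elim y)
    show ?case
    proof (cases "y \<in> B")
      case True
      have gy: "g y = ennreal (enn2real (g y))" using elim(1) by (simp add: g_def)
      have G0: "enn2real (g y) \<le> Gb y / c + l"
      proof -
        have "enn2real (g y) \<le> enn2real (g y) powr p / c + l" unfolding c_def by (rule young_lam[OF p l]) simp
        also have "enn2real (g y) powr p = Gb y" using elim(2) by (simp add: g_def)
        finally show ?thesis .
      qed
      have "e = ennreal w * (ennreal (m powr (- \<alpha> / n) / m) * D)" unfolding e_def eq1 by (simp add: mult.assoc)
      also have "\<dots> \<le> ennreal w * g y" using sharp[OF True] by (rule mult_left_mono) simp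
      also have "\<dots> = ennreal w * ennreal (enn2real (g y))" using gy by simp
      also have "\<dots> \<le> ennreal w * ennreal (Gb y / c + l)" using G0 by (intro mult_left_mono ennreal_leI) auto
      finally show ?thesis using True by simp
    qed simp
  qed
  have Bl: "B \<in> sets lebesgue" by (simp add: B_def)
  note Gb(1)[measurable]
  have [measurable]: "B \<in> sets borel" by (simp add: B_def)
  have "e * ennreal m = (\<integral>\<^sup>+y. e * indicator B y \<partial>lebesgue)"
    by (simp add: nn_integral_cmult_indicator[OF Bl] emB)
  also have "\<dots> \<le> (\<integral>\<^sup>+y. ennreal w * ennreal (Gb y / c + l) * indicator B y \<partial>lebesgue)"
    by (rule nn_integral_mono_AE[OF ae])
  also have "\<dots> = (\<integral>\<^sup>+y. ennreal w * ennreal (Gb y / c + l) * indicator B y \<partial>lborel)"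
    by (simp add: nn_integral_completion)
  also have "\<dots> = (\<integral>\<^sup>+y. ennreal w * (ennreal (1 / c) * (ennreal (Gb y) * indicator B y) + ennreal l * indicator B y) \<partial>lborel)"
  proof (intro nn_integral_cong)
    fix y
    have "ennreal (Gb y / c + l) = ennreal (1 / c) * ennreal (Gb y) + ennreal l"
      using c l Gb(2)[of y] by (simp add: ennreal_plus ennreal_mult''[symmetric] divide_inverse mult.commute)
    then show "ennreal w * ennreal (Gb y / c + l) * indicator B y = ennreal w * (ennreal (1 / c) * (ennreal (Gb y) * indicator B y) + ennreal l * indicator B y)"
      by (simp add: algebra_simps)
  qed
  also have "\<dots> = ennreal w * (ennreal (1 / c) * (\<integral>\<^sup>+y. ennreal (Gb y) * indicator B y \<partial>lborel) + ennreal l * emeasure lborel B)"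
    by (simp add: nn_integral_cmult nn_integral_add nn_integral_cmult_indicator)
  also have "emeasure lborel B = ennreal m" using emB by (simp add: emeasure_completion)
  finally have "e * ennreal m \<le> ennreal w * (ennreal (1 / c) * (\<integral>\<^sup>+y. ennreal (Gb y) * indicator B y \<partial>lborel) + ennreal (l * m))"
    using l m by (simp add: ennreal_mult)
  then have "e \<le> ennreal (1 / m) * (ennreal w * (ennreal (1 / c) * (\<integral>\<^sup>+y. ennreal (Gb y) * indicator B y \<partial>lborel) + ennreal (l * m)))"
    by (rule ennreal_mult_le_div[OF m])
  also have "\<dots> = ennreal (w / m) * (ennreal (1 / c) * (\<integral>\<^sup>+y. ennreal (Gb y) * indicator B y \<partial>lborel) + ennreal (l * m))"
    using w m by (simp add: mult.assoc[symmetric] ennreal_mult''[symmetric])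
  finally show ?thesis unfolding e_def D_def B_def m_def w_def n_def c_def .
qed


lemma young_choice:
  fixes p l A :: real
  assumes p: "p > 1" and l: "l > 0" and A: "0 \<le> A" "A \<le> l powr p"
  shows "A / (p * l powr (p - 1)) \<le> l"
proof -
  have lp: "l powr p = l powr (p - 1) * l"
  proof -
    have "l powr (p - 1 + 1) = l powr (p - 1) * l powr 1" by (rule powr_add)
    then show ?thesis using l by simp
  qed
  have pos: "p * l powr (p - 1) > 0" using p l by simp
  have "A / (p * l powr (p - 1)) \<le> l powr p / (p * l powr (p - 1))"
    using A pos by (intro divide_right_mono) auto
  also have "\<dots> = l / p" using l p unfolding lp by (simp add: field_simps)
  also have "\<dots> \<le> l" using l p by (simp add: field_simps)
  finally show ?thesis .
qed

lemma Y_real_bound: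
  fixes p V1 NF \<epsilon> :: real
  assumes p: "p > 1" and V1: "V1 > 0" and NF: "NF \<ge> 0" and e: "\<epsilon> > 0"
  defines "l \<equiv> V1 powr (- 1 / p) * (NF powr (1 / p) + \<epsilon>)"
  shows "NF / (V1 * (p * l powr (p - 1))) + l \<le> 2 * l"
proof -
  have N0: "NF powr (1/p) \<ge> 0" by simp
  have l: "l > 0" unfolding l_def using V1 e N0 by (intro mult_pos_pos add_nonneg_pos) auto
  have "NF / V1 \<le> l powr p"
  proof -
    have "NF = (NF powr (1/p)) powr p" using p NF by (simp add: powr_powr)
    also have "\<dots> \<le> (NF powr (1/p) + \<epsilon>) powr p" using e p by (intro powr_mono2) auto
    finally have "NF / V1 \<le> (NF powr (1/p) + \<epsilon>) powr p / V1" using V1 by (intro divide_right_mono) auto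
    also have "\<dots> = l powr p"
    proof -
      have "(V1 powr (- 1 / p)) powr p = V1 powr (-1)" using p V1 by (simp add: powr_powr)
      then have "l powr p = V1 powr (-1) * (NF powr (1/p) + \<epsilon>) powr p"
        unfolding l_def using V1 e N0 by (simp add: powr_mult)
      then show ?thesis using V1 by (simp add: powr_minus divide_inverse mult.commute)
    qed
    finally show ?thesis .
  qed
  then have "(NF / V1) / (p * l powr (p - 1)) \<le> l" using NF V1 by (intro young_choice[OF p l]) auto
  then show ?thesis by (simp add: field_simps)
qed

lemma half_pow_powr: "((1/2::real) ^ j) powr b = ((1/2) powr b) ^ j"
proof (induction j)
  case 0 then show ?case by simp
next
  case (Suc j)
  have "((1/2::real) ^ Suc j) powr b = ((1/2) * (1/2) ^ j) powr b" by simp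
  also have "\<dots> = (1/2) powr b * ((1/2) ^ j) powr b" by (rule powr_mult)
  finally show ?case using Suc by simp
qed

lemma Z_real_bound:
  fixes V1 \<rho> p csr NG \<Lambda> s \<alpha> :: real and n :: nat
  assumes V1: "V1 > 0" and \<rho>: "\<rho> > 0" and p: "p > 1" and csr: "csr \<ge> 0" and NG: "NG \<ge> 0"
    and \<Lambda>: "\<Lambda> > 0" "csr * NG / V1 \<le> \<Lambda> powr p" and n: "n > 0"
  defines "m \<equiv> \<rho> ^ n * V1"
  defines "l \<equiv> \<rho> powr ((s - real n) / p) * \<Lambda>"
  defines "c \<equiv> p * l powr (p - 1)"
  defines "w \<equiv> m powr (\<alpha> / real n)"
  shows "(w / m) * (csr * \<rho> powr s * NG / c + l * m) \<le> 2 * V1 powr (\<alpha> / real n) * \<Lambda> * \<rho> powr (\<alpha> + (s - real n) / p)"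
proof -
  have m: "m > 0" unfolding m_def using V1 \<rho> by simp
  have l: "l > 0" unfolding l_def using \<rho> \<Lambda> by simp
  have w: "w > 0" unfolding w_def using m by simp
  have c: "c > 0" unfolding c_def using p l by simp
  define X where "X = csr * \<rho> powr s * NG"
  have X: "X \<ge> 0" unfolding X_def using csr NG by simp
  have "X / m \<le> l powr p"
  proof -
    have rn: "\<rho> ^ n = \<rho> powr real n" using \<rho> by (simp add: powr_realpow)
    have "X / m = \<rho> powr (s - real n) * (csr * NG / V1)"
      unfolding X_def m_def rn using \<rho> V1 by (simp add: powr_diff field_simps)
    also have "\<dots> \<le> \<rho> powr (s - real n) * \<Lambda> powr p" using \<Lambda> by (intro mult_left_mono) auto
    also have "\<dots> = l powr p"
    proof -
      have "(\<rho> powr ((s - real n) / p)) powr p = \<rho> powr (s - real n)" using p by (simp add: powr_powr)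
      then show ?thesis unfolding l_def using \<rho> \<Lambda> by (simp add: powr_mult)
    qed
    finally show ?thesis .
  qed
  then have Xc: "(X / m) / c \<le> l" unfolding c_def using X m by (intro young_choice[OF p l]) auto
  have "(w / m) * (X / c + l * m) = w * ((X / m) / c + l)" using m c by (simp add: field_simps)
  also have "\<dots> \<le> w * (2 * l)" using Xc w by (intro mult_left_mono) auto
  also have "w * (2 * l) = 2 * V1 powr (\<alpha> / real n) * \<Lambda> * \<rho> powr (\<alpha> + (s - real n) / p)"
  proof -
    have "w = (\<rho> ^ n) powr (\<alpha> / real n) * V1 powr (\<alpha> / real n)" unfolding w_def m_def
      using \<rho> V1 by (simp add: powr_mult)
    also have "(\<rho> ^ n) powr (\<alpha> / real n) = \<rho> powr \<alpha>"
      using \<rho> n by (simp add: powr_realpow[symmetric] powr_powr)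
    finally have "w = \<rho> powr \<alpha> * V1 powr (\<alpha> / real n)" .
    then show ?thesis unfolding l_def using \<rho> by (simp add: powr_add mult_ac)
  qed
  finally show ?thesis unfolding X_def .
qed

lemma locint:
  fixes f :: "'a::euclidean_space \<Rightarrow> real"
  assumes p: "p > 1" and fm: "f \<in> borel_measurable lebesgue" and fi: "integrable lebesgue (\<lambda>x. \<bar>f x\<bar> powr p)"
    and r: "r > 0"
  shows "integrable (lebesgue_on (ball c r)) f"
proof -
  have B: "ball c r \<in> sets lebesgue" by simp
  have fin: "emeasure lebesgue (ball c r) < \<infinity>"
    using emeasure_lborel_ball_finite[of c r] by (simp add: emeasure_completion)
  have "integrable lebesgue (\<lambda>x. indicator (ball c r) x *\<^sub>R f x)"
  proof (rule Bochner_Integration.integrable_bound[of _ "\<lambda>x. indicator (ball c r) x * 1 + \<bar>f x\<bar> powr p"])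
    show "integrable lebesgue (\<lambda>x. indicator (ball c r) x * 1 + \<bar>f x\<bar> powr p)"
      using fin fi by (intro Bochner_Integration.integrable_add integrable_real_mult_indicator) auto
    show "(\<lambda>x. indicator (ball c r) x *\<^sub>R f x) \<in> borel_measurable lebesgue" using fm by (intro borel_measurable_scaleR borel_measurable_indicator) auto
    show "AE x in lebesgue. norm (indicator (ball c r) x *\<^sub>R f x) \<le> norm (indicator (ball c r) x * 1 + \<bar>f x\<bar> powr p)"
    proof (rule AE_I2)
      fix x
      have "\<bar>f x\<bar> \<le> \<bar>f x\<bar> powr p / (p * 1 powr (p - 1)) + 1" by (rule young_lam[OF p]) auto
      also have "\<dots> \<le> \<bar>f x\<bar> powr p + 1"
      proof -
        have "\<bar>f x\<bar> powr p \<le> p * \<bar>f x\<bar> powr p" using p by (intro mult_le_cancel_right1[THEN iffD2] ) auto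
        then show ?thesis using p by (simp add: field_simps)
      qed
      finally have "\<bar>f x\<bar> \<le> \<bar>f x\<bar> powr p + 1" .
      then show "norm (indicator (ball c r) x *\<^sub>R f x) \<le> norm (indicator (ball c r) x * 1 + \<bar>f x\<bar> powr p)"
        by (auto simp: indicator_def)
    qed
  qed
  then show ?thesis using B by (subst integrable_restrict_space) auto
qed


theorem lemma3p14:
  fixes p \<alpha> s :: real
  assumes "1 < p" and "0 < \<alpha>" and "\<alpha> \<le> real DIM('a::euclidean_space) / p"
    and "s > real DIM('a) - \<alpha> * p"
  shows "\<exists>C :: real \<Rightarrow> real. \<forall>(\<mu> :: 'a measure) (f :: 'a \<Rightarrow> real).
           Ms s \<mu> \<longrightarrow> in_Cp p \<alpha> f \<longrightarrow>
           (\<integral>\<^sup>+ x. maximal f x \<partial>\<mu>) \<le> ennreal (C (enn2real (cs s \<mu>)) * Cp_norm p \<alpha> f)"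
proof -
  have p: "p > 1" using assms(1) .
  define n where "n = DIM('a)"
  have n: "n > 0" unfolding n_def by simp
  define k where "k = nat \<lfloor>\<alpha>\<rfloor>"
  obtain K where K0: "K \<ge> 0" and KL: "\<forall>Q\<in>polys k. \<forall>(c::'a) r y. r > 0 \<longrightarrow> y \<in> ball c r \<longrightarrow>
     ennreal \<bar>Q y\<bar> * emeasure lebesgue (ball c r) \<le> ennreal K * (\<integral>\<^sup>+x\<in>ball c r. ennreal \<bar>Q x\<bar> \<partial>lebesgue)"
    using L_ball[where 'a='a, of k] by blast
  define V1 where "V1 = measure lebesgue (ball (0::'a) 1)"
  have V1: "V1 > 0" unfolding V1_def by (rule V1_pos)
  define \<beta> where "\<beta> = \<alpha> + (s - real n) / p"
  have \<beta>: "\<beta> > 0"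
  proof -
    have "s - real n > - (\<alpha> * p)" using assms(4) by (simp add: n_def)
    then have "(s - real n) / p > - (\<alpha> * p) / p" using p by (intro divide_strict_right_mono) auto
    then show ?thesis using p by (simp add: \<beta>_def)
  qed
  define q where "q = (1/2::real) powr \<beta>"
  have q0: "q > 0" unfolding q_def by simp
  have q1: "q < 1"
  proof -
    have "ln (1/2::real) < 0" by (rule ln_less_zero) auto
    then have "\<beta> * ln (1/2) < 0" using \<beta> by (simp add: mult_pos_neg)
    then show ?thesis unfolding q_def powr_def by simp
  qed
  define C1 where "C1 = 2 ^ n * K + 1"
  define C2 where "C2 = 2 ^ n * (K * (2 ^ n + 2) + 1)"
  have C1: "C1 \<ge> 0" "C2 \<ge> 0" using K0 by (auto simp: C1_def C2_def)
  define A where "A = 2 * C1 * V1 powr (- 1 / p)"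
  define Bc where "Bc t = 2 * C2 * V1 powr (\<alpha> / real n) * ((t + 1) / V1) powr (1 / p) / (1 - q)" for t
  define C where "C t = A + Bc t" for t
  have A0: "A \<ge> 0" unfolding A_def using C1 by simp
  have Bc0: "Bc t \<ge> 0" for t unfolding Bc_def using C1 q1 by simp
  show ?thesis
  proof (intro exI[of _ C] allI impI)
    fix \<mu> :: "'a measure" and f :: "'a \<Rightarrow> real"
    assume Ms: "Ms s \<mu>" and Cp: "in_Cp p \<alpha> f"
    have prob: "prob_space \<mu>" and sets_mu: "sets \<mu> = sets borel" and csfin: "cs s \<mu> < \<infinity>"
      using Ms by (auto simp: Ms_def)
    interpret prob_space \<mu> by (rule prob)
    define csr where "csr = enn2real (cs s \<mu>)"
    have cs_eq: "cs s \<mu> = ennreal csr" using csfin by (simp add: csr_def)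
    have csr0: "csr \<ge> 0" by (simp add: csr_def)
    define g where "g = sharp_max \<alpha> f"
    define G0 where "G0 = (\<lambda>y. enn2real (g y))"
    have fm: "f \<in> borel_measurable lebesgue" and fi: "integrable lebesgue (\<lambda>x. \<bar>f x\<bar> powr p)"
      using Cp by (auto simp: in_Cp_def in_Lp_def)
    have gfin: "AE y in lebesgue. sharp_max \<alpha> f y < \<infinity>" and G0m: "G0 \<in> borel_measurable lebesgue"
      and G0i: "integrable lebesgue (\<lambda>x. \<bar>G0 x\<bar> powr p)"
      using Cp by (auto simp: in_Cp_def in_Lp_def in_Lp_enn_def G0_def g_def)
    define NF where "NF = (\<integral>x. \<bar>f x\<bar> powr p \<partial>lebesgue)"
    define NG where "NG = (\<integral>x. \<bar>G0 x\<bar> powr p \<partial>lebesgue)"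
    have NF0: "NF \<ge> 0" unfolding NF_def by (intro integral_nonneg_AE) auto
    have NG0: "NG \<ge> 0" unfolding NG_def by (intro integral_nonneg_AE) auto
    define Nf where "Nf = NF powr (1 / p)"
    define Ng where "Ng = NG powr (1 / p)"
    have Nf0: "Nf \<ge> 0" and Ng0: "Ng \<ge> 0" by (simp_all add: Nf_def Ng_def)
    have Cpn: "Cp_norm p \<alpha> f = Nf + Ng"
      by (simp add: Cp_norm_def Lp_norm_def Nf_def Ng_def NF_def NG_def G0_def g_def)
    
    have "(\<lambda>y. \<bar>G0 y\<bar> powr p) \<in> borel_measurable (completion lborel)" using G0m by measurable
    then obtain Gb' where Gb'm: "Gb' \<in> borel_measurable lborel" and ae': "AE y in lborel. \<bar>G0 y\<bar> powr p = Gb' y"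
      using completion_ex_borel_measurable_real by blast
    define Gb where "Gb y = max (Gb' y) 0" for y
    have Gbm: "Gb \<in> borel_measurable borel" using Gb'm unfolding Gb_def by simp
    have Gb0: "Gb y \<ge> 0" for y by (simp add: Gb_def)
    have Gae: "AE y in lebesgue. Gb y = \<bar>enn2real (sharp_max \<alpha> f y)\<bar> powr p"
      using AE_completion[OF ae'] by eventually_elim (unfold Gb_def G0_def g_def, metis max.absorb1 powr_ge_zero)
    have NGeq: "(\<integral>\<^sup>+y. ennreal (Gb y) \<partial>lborel) = ennreal NG"
    proof -
      have "(\<integral>\<^sup>+y. ennreal (Gb y) \<partial>lborel) = (\<integral>\<^sup>+y. ennreal (Gb y) \<partial>lebesgue)"
        by (simp add: nn_integral_completion)
      also have "\<dots> = (\<integral>\<^sup>+y. ennreal (\<bar>G0 y\<bar> powr p) \<partial>lebesgue)"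
        using Gae by (intro nn_integral_cong_AE) (auto simp: G0_def g_def)
      also have "\<dots> = ennreal NG" unfolding NG_def using G0i by (intro nn_integral_eq_integral) auto
      finally show ?thesis .
    qed
    have loc: "integrable (lebesgue_on (ball c r)) f" if "r > 0" for c r
      by (rule locint[OF p fm fi that])
    
    have main_eps: "(\<integral>\<^sup>+x. maximal f x \<partial>\<mu>) \<le> ennreal (C csr * (Nf + Ng) + C csr * (2 * \<epsilon>))"
      if e: "\<epsilon> > 0" for \<epsilon>
    proof -
      define l0 where "l0 = V1 powr (- 1 / p) * (Nf + \<epsilon>)"
      have l0: "l0 > 0" unfolding l0_def using V1 e Nf0 by (intro mult_pos_pos add_nonneg_pos) auto
      define Y where "Y = ennreal (NF / (V1 * (p * l0 powr (p - 1))) + l0)"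
      have Yb: "(\<integral>\<^sup>+y\<in>ball x r. ennreal \<bar>f y\<bar> \<partial>lebesgue) / emeasure lebesgue (ball x r) \<le> Y"
        if "r \<ge> 1" for x :: 'a and r
        unfolding Y_def V1_def NF_def using avg_bound[OF p fm fi l0 that] by simp
      have Y2: "Y \<le> ennreal (2 * l0)"
        unfolding Y_def l0_def Nf_def by (intro ennreal_leI Y_real_bound[OF p V1 NF0 e])
      define \<Lambda> where "\<Lambda> = ((csr + 1) / V1) powr (1 / p) * (Ng + \<epsilon>)"
      have \<Lambda>: "\<Lambda> > 0" unfolding \<Lambda>_def using V1 csr0 e Ng0 by (intro mult_pos_pos add_nonneg_pos) auto
      have \<Lambda>p: "csr * NG / V1 \<le> \<Lambda> powr p"
      proof -
        have "\<Lambda> powr p = ((csr + 1) / V1) * (Ng + \<epsilon>) powr p"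
          unfolding \<Lambda>_def using V1 csr0 p e Ng0 by (simp add: powr_mult powr_powr)
        moreover have "NG \<le> (Ng + \<epsilon>) powr p"
        proof -
          have "NG = Ng powr p" unfolding Ng_def using p NG0 by (simp add: powr_powr)
          also have "\<dots> \<le> (Ng + \<epsilon>) powr p" using e p Ng0 by (intro powr_mono2) auto
          finally show ?thesis .
        qed
        moreover have "csr * NG / V1 \<le> ((csr + 1) / V1) * NG" using V1 NG0 csr0 by (simp add: field_simps mult_right_mono)
        moreover have "((csr + 1) / V1) * NG \<le> ((csr + 1) / V1) * (Ng + \<epsilon>) powr p"
          using calculation(2) V1 csr0 by (intro mult_left_mono) auto
        ultimately show ?thesis by simp
      qed
      define \<rho> where "\<rho> j = (1/2::real) ^ j" for j
      have \<rho>: "\<rho> j > 0" for j by (simp add: \<rho>_def)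
      define mj where "mj j = \<rho> j ^ n * V1" for j
      define lj where "lj j = \<rho> j powr ((s - real n) / p) * \<Lambda>" for j
      have lj: "lj j > 0" for j unfolding lj_def using \<rho>[of j] \<Lambda> by simp
      define cj where "cj j = p * lj j powr (p - 1)" for j
      define W where "W j x = (\<integral>\<^sup>+y. ennreal (Gb y) * indicator (ball x (\<rho> j)) y \<partial>lborel)" for j x
      define Z where "Z j x = ennreal (mj j powr (\<alpha> / real n) / mj j) * (ennreal (1 / cj j) * W j x + ennreal (lj j * mj j))" for j x
      have mj_eq: "measure lebesgue (ball x (\<rho> j)) = mj j" for x :: 'a and j
        using measure_ball_eq[of "\<rho> j" x] \<rho>[of j] by (simp add: mj_def V1_def n_def)
      have ebound: "ennreal (1 / measure lebesgue (ball x (\<rho> j))) *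
          (\<integral>\<^sup>+y\<in>ball x (\<rho> j). ennreal \<bar>f y - poly_proj k (ball x (\<rho> j)) f y\<bar> \<partial>lebesgue) \<le> Z j x" for x :: 'a and j
        using e_bound[OF p \<rho>[of j] lj[of j] gfin Gbm Gb0 Gae, of x]
        unfolding mj_eq Z_def W_def cj_def k_def n_def .
      have pw: "maximal f x \<le> ennreal C1 * Y + ennreal C2 * (\<Sum>j. Z j x)" for x :: 'a
      proof -
        have "maximal f x \<le> ennreal C1 * Y + ennreal C2 *
           (\<Sum>j. ennreal (1 / measure lebesgue (ball x (\<rho> j))) *
              (\<integral>\<^sup>+y\<in>ball x (\<rho> j). ennreal \<bar>f y - poly_proj k (ball x (\<rho> j)) f y\<bar> \<partial>lebesgue))"
          using maximal_pointwise[OF fm loc K0 KL Yb] unfolding C1_def C2_def n_def \<rho>_def .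
        also have "\<dots> \<le> ennreal C1 * Y + ennreal C2 * (\<Sum>j. Z j x)"
          using ebound by (intro add_left_mono mult_left_mono suminf_le) auto
        finally show ?thesis .
      qed
      have sf: "sigma_finite_measure \<mu>" by (rule sigma_finite_measure_axioms)
      have Cmu: "emeasure \<mu> (ball y (\<rho> j)) \<le> cs s \<mu> * ennreal (\<rho> j powr s)" for y :: 'a and j
        by (rule cs_ball_bound[OF \<rho>])
      have Wm: "W j \<in> borel_measurable \<mu>" for j
        unfolding W_def by (rule tonelli_ball(1)[OF sets_mu sf Gbm \<rho> Cmu])
      have Wint: "(\<integral>\<^sup>+x. W j x \<partial>\<mu>) \<le> ennreal (csr * \<rho> j powr s * NG)" for j
      proof -
        have "(\<integral>\<^sup>+x. W j x \<partial>\<mu>) \<le> cs s \<mu> * ennreal (\<rho> j powr s) * (\<integral>\<^sup>+y. ennreal (Gb y) \<partial>lborel)"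
          unfolding W_def by (rule tonelli_ball(2)[OF sets_mu sf Gbm \<rho> Cmu])
        also have "\<dots> = ennreal (csr * \<rho> j powr s * NG)"
          using csr0 NG0 by (simp add: cs_eq NGeq ennreal_mult)
        finally show ?thesis .
      qed
      have Zm: "Z j \<in> borel_measurable \<mu>" for j unfolding Z_def using Wm[of j] by measurable
      have Zint: "(\<integral>\<^sup>+x. Z j x \<partial>\<mu>) \<le> ennreal (2 * V1 powr (\<alpha> / real n) * \<Lambda> * q ^ j)" for j
      proof -
        define w where "w = mj j powr (\<alpha> / real n)"
        have mjp: "mj j > 0" unfolding mj_def using \<rho>[of j] V1 by simp
        have cjp: "cj j > 0" unfolding cj_def using p lj[of j] by simp
        have "(\<integral>\<^sup>+x. Z j x \<partial>\<mu>) = ennreal (w / mj j) * (ennreal (1 / cj j) * (\<integral>\<^sup>+x. W j x \<partial>\<mu>) + ennreal (lj j * mj j))"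
          unfolding Z_def w_def using Wm[of j]
          by (simp add: nn_integral_cmult nn_integral_add emeasure_space_1)
        also have "\<dots> \<le> ennreal (w / mj j) * (ennreal (1 / cj j) * ennreal (csr * \<rho> j powr s * NG) + ennreal (lj j * mj j))"
          using Wint[of j] by (intro mult_left_mono add_right_mono) auto
        also have "\<dots> = ennreal ((w / mj j) * (csr * \<rho> j powr s * NG / cj j + lj j * mj j))"
          using mjp cjp csr0 NG0 lj[of j] by (simp add: ennreal_mult''[symmetric] ennreal_plus[symmetric] divide_inverse mult_ac del: ennreal_plus)
        also have "\<dots> \<le> ennreal (2 * V1 powr (\<alpha> / real n) * \<Lambda> * \<rho> j powr (\<alpha> + (s - real n) / p))"
          unfolding w_def mj_def cj_def lj_def
          by (intro ennreal_leI Z_real_bound[OF V1 \<rho> p csr0 NG0 \<Lambda> \<Lambda>p n])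
        also have "\<rho> j powr (\<alpha> + (s - real n) / p) = q ^ j"
          unfolding \<rho>_def q_def \<beta>_def by (rule half_pow_powr)
        finally show ?thesis .
      qed
      define a where "a = 2 * V1 powr (\<alpha> / real n) * \<Lambda>"
      have a0: "a \<ge> 0" unfolding a_def using \<Lambda> by simp
      have sumZ: "(\<Sum>j. \<integral>\<^sup>+x. Z j x \<partial>\<mu>) \<le> ennreal (a / (1 - q))"
      proof -
        have "(\<Sum>j. \<integral>\<^sup>+x. Z j x \<partial>\<mu>) \<le> (\<Sum>j. ennreal (a * q ^ j))"
          using Zint unfolding a_def by (intro suminf_le) auto
        also have "\<dots> = ennreal (\<Sum>j. a * q ^ j)"
          using a0 q0 q1 by (intro suminf_ennreal2 summable_mult summable_geometric) auto
        also have "(\<Sum>j. a * q ^ j) = a / (1 - q)"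
          using q0 q1 by (simp add: suminf_mult suminf_geometric summable_geometric divide_inverse)
        finally show ?thesis .
      qed
      have "(\<integral>\<^sup>+x. maximal f x \<partial>\<mu>) \<le> (\<integral>\<^sup>+x. ennreal C1 * Y + ennreal C2 * (\<Sum>j. Z j x) \<partial>\<mu>)"
        by (intro nn_integral_mono pw)
      also have "\<dots> = ennreal C1 * Y + ennreal C2 * (\<Sum>j. \<integral>\<^sup>+x. Z j x \<partial>\<mu>)"
        using Zm by (simp add: nn_integral_add nn_integral_cmult nn_integral_suminf emeasure_space_1)
      also have "\<dots> \<le> ennreal C1 * ennreal (2 * l0) + ennreal C2 * ennreal (a / (1 - q))"
        using Y2 sumZ by (intro add_mono mult_left_mono) auto
      also have "\<dots> = ennreal (A * (Nf + \<epsilon>) + Bc csr * (Ng + \<epsilon>))"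
      proof -
        have h1: "C1 * (2 * l0) = A * (Nf + \<epsilon>)" unfolding A_def l0_def by (simp add: mult_ac)
        have h2: "C2 * (a / (1 - q)) = Bc csr * (Ng + \<epsilon>)"
          unfolding Bc_def a_def \<Lambda>_def by (simp add: mult_ac)
        have m1: "ennreal C1 * ennreal (2 * l0) = ennreal (C1 * (2 * l0))" using C1 l0 by (simp add: ennreal_mult)
        have m2: "ennreal C2 * ennreal (a / (1 - q)) = ennreal (C2 * (a / (1 - q)))" using C1 a0 q1 by (intro ennreal_mult[symmetric]) auto
        have n1: "0 \<le> A * (Nf + \<epsilon>)" using A0 Nf0 e by simp
        have n2: "0 \<le> Bc csr * (Ng + \<epsilon>)" using Bc0[of csr] Ng0 e by simp
        show ?thesis unfolding m1 m2 h1 h2 using n1 n2 by (rule ennreal_plus[symmetric])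
      qed
      also have "\<dots> \<le> ennreal (C csr * (Nf + Ng) + C csr * (2 * \<epsilon>))"
      proof (intro ennreal_leI)
        have "A * (Nf + \<epsilon>) \<le> A * (Nf + Ng + 2 * \<epsilon>)" using A0 Ng0 e by (intro mult_left_mono) auto
        moreover have "Bc csr * (Ng + \<epsilon>) \<le> Bc csr * (Nf + Ng + 2 * \<epsilon>)" using Bc0 Nf0 e by (intro mult_left_mono) auto
        ultimately show "A * (Nf + \<epsilon>) + Bc csr * (Ng + \<epsilon>) \<le> C csr * (Nf + Ng) + C csr * (2 * \<epsilon>)"
          unfolding C_def by (simp add: algebra_simps)
      qed
      finally show ?thesis .
    qed
    have C0: "C csr \<ge> 0" unfolding C_def using A0 Bc0 by simp
    show "(\<integral>\<^sup>+x. maximal f x \<partial>\<mu>) \<le> ennreal (C (enn2real (cs s \<mu>)) * Cp_norm p \<alpha> f)"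
      unfolding csr_def[symmetric] Cpn
    proof (rule ennreal_le_epsilon)
      fix e :: real assume e: "0 < e"
      define \<epsilon> where "\<epsilon> = e / (2 * C csr + 1)"
      have \<epsilon>: "\<epsilon> > 0" unfolding \<epsilon>_def using e C0 by simp
      have "C csr * (2 * \<epsilon>) \<le> e"
      proof -
        have "C csr * (2 * \<epsilon>) = e * (2 * C csr) / (2 * C csr + 1)" unfolding \<epsilon>_def by (simp add: field_simps)
        also have "\<dots> \<le> e" using e C0 by (simp add: field_simps)
        finally show ?thesis .
      qed
      then have "ennreal (C csr * (Nf + Ng) + C csr * (2 * \<epsilon>)) \<le> ennreal (C csr * (Nf + Ng)) + ennreal e"
      proof -
        assume ce: "C csr * (2 * \<epsilon>) \<le> e"
        have "ennreal (C csr * (Nf + Ng) + C csr * (2 * \<epsilon>)) = ennreal (C csr * (Nf + Ng)) + ennreal (C csr * (2 * \<epsilon>))"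
          using C0 Nf0 Ng0 \<epsilon> by (intro ennreal_plus) auto
        also have "\<dots> \<le> ennreal (C csr * (Nf + Ng)) + ennreal e"
          using ce by (intro add_left_mono ennreal_leI)
        finally show ?thesis .
      qed
      with main_eps[OF \<epsilon>] show "(\<integral>\<^sup>+x. maximal f x \<partial>\<mu>) \<le> ennreal (C csr * (Nf + Ng)) + ennreal e"
        by (rule order_trans)
    qed
  qed
qed

end
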